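(* Let $\mathcal{C}$ be a small category, $n\ge0$, and let $M$ be an indecomposable $k\widetilde{\mathcal{E}}^{\mathcal{C}}_n$-module. Then for every $0\le i\le n+1$ the $k\widetilde{\mathcal{E}}^{\mathcal{C}}_{n+1}$-module $\partial_i^*M$ is indecomposable. Likewise, if $M$ is an indecomposable $k\mathcal{C}$-module, then $\partial_0^*M$ and $\partial_1^*M$ are indecomposable $k\widetilde{\mathcal{G}}^{\mathcal{C}}_1$-modules.
   Context: A module over a small category is a functor to finite-dimensional $k$-vector spaces ($k$ a field); indecomposable means nonzero and not isomorphic to a direct sum of two nonzero modules; $F^*M=M\circ F$. $\widetilde{\mathcal{E}}^{\mathcal{C}}_n=\mathcal{C}^{[n]}$ has objects strings $x_0\xrightarrow{u_1}\cdots\xrightarrow{u_n}x_n$ of morphisms of $\mathcal{C}$ and morphisms commutative ladders $(f_0,\dots,f_n)$; the face functors $\partial_i:\widetilde{\mathcal{E}}^{\mathcal{C}}_{n+1}\to\widetilde{\mathcal{E}}^{\mathcal{C}}_n$ ($0\le i\le n+1$) delete $x_i$ (dropping the first or last morphism for $i=0$, $i=n+1$, and composing $u_{i+1}u_i$ otherwise) and delete $f_i$. $\widetilde{\mathcal{G}}^{\mathcal{C}}_1$ is the category with objects all morphisms $u:a\to b$ of $\mathcal{C}$ and morphisms $[u]\to[v]$ ($v:c\to d$) the identities and the pairs $(w\circ u,\;v\circ w)$ for $w:b\to c$; $\partial_0[u]=b$, $\partial_1[u]=a$. *)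

theory Defs
  imports "Jordan_Normal_Form.Matrix"
begin

record ('o, 'm) cat =
  Obj :: "'o set"
  Arr :: "'m set"
  Dom :: "'m \<Rightarrow> 'o"
  Cod :: "'m \<Rightarrow> 'o"
  Id  :: "'o \<Rightarrow> 'm"
  Comp :: "'m \<Rightarrow> 'm \<Rightarrow> 'm"

definition is_category :: "('o, 'm) cat \<Rightarrow> bool" where
  "is_category C \<longleftrightarrow>
     (\<forall>f\<in>Arr C. Dom C f \<in> Obj C \<and> Cod C f \<in> Obj C) \<and>
     (\<forall>x\<in>Obj C. Id C x \<in> Arr C \<and> Dom C (Id C x) = x \<and> Cod C (Id C x) = x) \<and>
     (\<forall>f\<in>Arr C. \<forall>g\<in>Arr C. Cod C f = Dom C g \<longrightarrow>
        Comp C g f \<in> Arr C \<and> Dom C (Comp C g f) = Dom C f \<and> Cod C (Comp C g f) = Cod C g) \<and>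
     (\<forall>f\<in>Arr C. Comp C f (Id C (Dom C f)) = f \<and> Comp C (Id C (Cod C f)) f = f) \<and>
     (\<forall>f\<in>Arr C. \<forall>g\<in>Arr C. \<forall>h\<in>Arr C. Cod C f = Dom C g \<longrightarrow> Cod C g = Dom C h \<longrightarrow>
        Comp C h (Comp C g f) = Comp C (Comp C h g) f)"

text \<open>A finite-dimensional k-vector space is represented (up to isomorphism) by
k^d; a module M over C assigns to each object x a dimension (fst M x) and to each
arrow f : x \<rightarrow> y a (d y \<times> d x)-matrix (snd M f), functorially.\<close>

type_synonym ('m, 'o, 'k) module = "('o \<Rightarrow> nat) \<times> ('m \<Rightarrow> 'k mat)"

definition is_module :: "('o, 'm) cat \<Rightarrow> ('m, 'o, 'k::field) module \<Rightarrow> bool" where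
  "is_module C M \<longleftrightarrow>
     (\<forall>f\<in>Arr C. snd M f \<in> carrier_mat (fst M (Cod C f)) (fst M (Dom C f))) \<and>
     (\<forall>x\<in>Obj C. snd M (Id C x) = 1\<^sub>m (fst M x)) \<and>
     (\<forall>f\<in>Arr C. \<forall>g\<in>Arr C. Cod C f = Dom C g \<longrightarrow>
        snd M (Comp C g f) = snd M g * snd M f)"

definition nonzero_module :: "('o, 'm) cat \<Rightarrow> ('m, 'o, 'k::field) module \<Rightarrow> bool" where
  "nonzero_module C M \<longleftrightarrow> (\<exists>x\<in>Obj C. fst M x \<noteq> 0)"

definition module_iso :: "('o, 'm) cat \<Rightarrow> ('m, 'o, 'k::field) module \<Rightarrow> ('m, 'o, 'k) module \<Rightarrow> bool" where
  "module_iso C M N \<longleftrightarrow> (\<exists>\<phi> :: 'o \<Rightarrow> 'k mat.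
     (\<forall>x\<in>Obj C. \<phi> x \<in> carrier_mat (fst N x) (fst M x) \<and> invertible_mat (\<phi> x)) \<and>
     (\<forall>f\<in>Arr C. \<phi> (Cod C f) * snd M f = snd N f * \<phi> (Dom C f)))"

definition module_dsum :: "('m, 'o, 'k::field) module \<Rightarrow> ('m, 'o, 'k) module \<Rightarrow> ('m, 'o, 'k) module" where
  "module_dsum M1 M2 = ((\<lambda>x. fst M1 x + fst M2 x),
     (\<lambda>f. four_block_mat (snd M1 f) (0\<^sub>m (dim_row (snd M1 f)) (dim_col (snd M2 f)))
                          (0\<^sub>m (dim_row (snd M2 f)) (dim_col (snd M1 f))) (snd M2 f)))"

definition indecomposable :: "('o, 'm) cat \<Rightarrow> ('m, 'o, 'k::field) module \<Rightarrow> bool" where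
  "indecomposable C M \<longleftrightarrow> is_module C M \<and> nonzero_module C M \<and>
     \<not> (\<exists>M1 M2. is_module C M1 \<and> is_module C M2 \<and> nonzero_module C M1 \<and> nonzero_module C M2 \<and>
              module_iso C M (module_dsum M1 M2))"

definition pullback :: "('o2 \<Rightarrow> 'o) \<Rightarrow> ('m2 \<Rightarrow> 'm) \<Rightarrow> ('m, 'o, 'k) module \<Rightarrow> ('m2, 'o2, 'k) module" where
  "pullback Fo Fm M = (fst M \<circ> Fo, snd M \<circ> Fm)"

text \<open>An object x_0 --u_1--> ... --u_n--> x_n is a pair (xs, us) with xs = [x_0,...,x_n]
and us = [u_1,...,u_n] (so us!j : xs!j \<rightarrow> xs!(j+1)).  An arrow is a triple
(source, target, [f_0,...,f_n]) forming a commutative ladder.\<close>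

type_synonym ('o, 'm) string_obj = "'o list \<times> 'm list"
type_synonym ('o, 'm) ladder = "('o, 'm) string_obj \<times> ('o, 'm) string_obj \<times> 'm list"

definition E_obj :: "('o, 'm) cat \<Rightarrow> nat \<Rightarrow> ('o, 'm) string_obj set" where
  "E_obj C n = {(xs, us). length xs = Suc n \<and> length us = n \<and> set xs \<subseteq> Obj C \<and>
      (\<forall>j<n. us ! j \<in> Arr C \<and> Dom C (us ! j) = xs ! j \<and> Cod C (us ! j) = xs ! Suc j)}"

definition E_arr :: "('o, 'm) cat \<Rightarrow> nat \<Rightarrow> ('o, 'm) ladder set" where
  "E_arr C n = {(X, Y, fs). X \<in> E_obj C n \<and> Y \<in> E_obj C n \<and> length fs = Suc n \<and>
      (\<forall>j\<le>n. fs ! j \<in> Arr C \<and> Dom C (fs ! j) = fst X ! j \<and> Cod C (fs ! j) = fst Y ! j) \<and>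
      (\<forall>j<n. Comp C (snd Y ! j) (fs ! j) = Comp C (fs ! Suc j) (snd X ! j))}"

definition E_cat :: "('o, 'm) cat \<Rightarrow> nat \<Rightarrow> (('o, 'm) string_obj, ('o, 'm) ladder) cat" where
  "E_cat C n = \<lparr> Obj = E_obj C n, Arr = E_arr C n,
      Dom = (\<lambda>(X, Y, fs). X), Cod = (\<lambda>(X, Y, fs). Y),
      Id = (\<lambda>X. (X, X, map (Id C) (fst X))),
      Comp = (\<lambda>(Y', Z, gs) (X, Y, fs). (X, Z, map2 (Comp C) gs fs)) \<rparr>"

text \<open>Face functor \<partial>_i : E_{n+1} \<rightarrow> E_n (0 \<le> i \<le> n+1): delete x_i (dropping the first
morphism if i = 0, the last one if i = n+1, and composing u_{i+1} u_i otherwise) and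
delete f_i.\<close>

definition del_nth :: "nat \<Rightarrow> 'a list \<Rightarrow> 'a list" where
  "del_nth i xs = take i xs @ drop (Suc i) xs"

definition face_obj :: "('o, 'm) cat \<Rightarrow> nat \<Rightarrow> ('o, 'm) string_obj \<Rightarrow> ('o, 'm) string_obj" where
  "face_obj C i X = (let xs = fst X; us = snd X in
     (del_nth i xs,
      if i = 0 then tl us
      else if i = length us then butlast us
      else take (i - 1) us @ [Comp C (us ! i) (us ! (i - 1))] @ drop (Suc i) us))"

definition face_arr :: "('o, 'm) cat \<Rightarrow> nat \<Rightarrow> ('o, 'm) ladder \<Rightarrow> ('o, 'm) ladder" where
  "face_arr C i F = (case F of (X, Y, fs) \<Rightarrow> (face_obj C i X, face_obj C i Y, del_nth i fs))"

text \<open>Objects: arrows u : a \<rightarrow> b of C.  Arrows [u] \<rightarrow> [v] (v : c \<rightarrow> d): the identities,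
encoded (u, u, None), and the pairs (w \<circ> u, v \<circ> w) for w : b \<rightarrow> c, encoded
(u, v, Some (w \<circ> u, v \<circ> w)).\<close>

type_synonym 'm G_arr = "'m \<times> 'm \<times> ('m \<times> 'm) option"

definition G1_arr :: "('o, 'm) cat \<Rightarrow> 'm G_arr set" where
  "G1_arr C = {(u, u, None) | u. u \<in> Arr C} \<union>
     {(u, v, Some (Comp C w u, Comp C v w)) | u v w. u \<in> Arr C \<and> v \<in> Arr C \<and> w \<in> Arr C \<and>
        Dom C w = Cod C u \<and> Cod C w = Dom C v}"

definition G1_comp :: "('o, 'm) cat \<Rightarrow> 'm G_arr \<Rightarrow> 'm G_arr \<Rightarrow> 'm G_arr" where
  "G1_comp C g f = (case (f, g) of
      ((u, _, None), (_, v', h)) \<Rightarrow> (u, v', h)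
    | ((u, _, h), (_, v', None)) \<Rightarrow> (u, v', h)
    | ((u, _, Some (p, q)), (_, v', Some (p', q'))) \<Rightarrow> (u, v', Some (Comp C p' p, Comp C q' q)))"

definition G1_cat :: "('o, 'm) cat \<Rightarrow> ('m, 'm G_arr) cat" where
  "G1_cat C = \<lparr> Obj = Arr C, Arr = G1_arr C,
      Dom = (\<lambda>(u, v, h). u), Cod = (\<lambda>(u, v, h). v),
      Id = (\<lambda>u. (u, u, None)), Comp = G1_comp C \<rparr>"

text \<open>\<partial>_0 [u] = b = Cod u, \<partial>_1 [u] = a = Dom u; on the arrow (w u, v w) : [u] \<rightarrow> [v],
\<partial>_0 gives v w : b \<rightarrow> d and \<partial>_1 gives w u : a \<rightarrow> c; identities go to identities.\<close>

definition G_face0_arr :: "('o, 'm) cat \<Rightarrow> 'm G_arr \<Rightarrow> 'm" where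
  "G_face0_arr C F = (case F of (u, v, None) \<Rightarrow> Id C (Cod C u) | (u, v, Some (p, q)) \<Rightarrow> q)"

definition G_face1_arr :: "('o, 'm) cat \<Rightarrow> 'm G_arr \<Rightarrow> 'm" where
  "G_face1_arr C F = (case F of (u, v, None) \<Rightarrow> Id C (Dom C u) | (u, v, Some (p, q)) \<Rightarrow> p)"

end

theory Submission
  imports Defs
begin


lemma zero_row_mult:
  fixes A B :: "'k::field mat"
  assumes "A \<in> carrier_mat n m" "B \<in> carrier_mat m p" "i < n" "j < p"
    "\<forall>k<m. A $$ (i,k) = 0"
  shows "(A*B) $$ (i,j) = 0"
proof -
  have "(A*B) $$ (i,j) = row A i \<bullet> col B j" using assms by simp
  also have "\<dots> = (\<Sum>k\<in>{0..<m}. A $$ (i,k) * B $$ (k,j))"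
    using assms unfolding scalar_prod_def by (intro sum.cong) auto
  also have "\<dots> = 0" using assms by (intro sum.neutral) auto
  finally show ?thesis .
qed

lemma zero_col_mult:
  fixes A B :: "'k::field mat"
  assumes "A \<in> carrier_mat n m" "B \<in> carrier_mat m p" "i < n" "j < p"
    "\<forall>k<m. B $$ (k,j) = 0"
  shows "(A*B) $$ (i,j) = 0"
proof -
  have "(A*B) $$ (i,j) = row A i \<bullet> col B j" using assms by simp
  also have "\<dots> = (\<Sum>k\<in>{0..<m}. A $$ (i,k) * B $$ (k,j))"
    using assms unfolding scalar_prod_def by (intro sum.cong) auto
  also have "\<dots> = 0" using assms by (intro sum.neutral) auto
  finally show ?thesis .
qed

lemma inv_ex:
  fixes Q :: "'k::field mat"
  assumes "Q \<in> carrier_mat m m" "invertible_mat Q"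
  obtains R where "R \<in> carrier_mat m m" "Q * R = 1\<^sub>m m" "R * Q = 1\<^sub>m m"
proof -
  from assms(2) obtain R where R1: "Q * R = 1\<^sub>m (dim_row Q)" and R2: "R * Q = 1\<^sub>m (dim_row R)"
    unfolding invertible_mat_def inverts_mat_def by blast
  have dq: "dim_row Q = m" "dim_col Q = m" using assms(1) by auto
  have "dim_col R = dim_col (Q*R)" by simp
  also have "\<dots> = dim_col (1\<^sub>m (dim_row Q) :: 'k mat)" by (simp only: R1)
  also have "\<dots> = m" using dq by simp
  finally have c: "dim_col R = m" .
  have "m = dim_col (R*Q)" using dq by simp
  also have "\<dots> = dim_col (1\<^sub>m (dim_row R) :: 'k mat)" by (simp only: R2)
  also have "\<dots> = dim_row R" by simp
  finally have r: "dim_row R = m" by simp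
  have RC: "R \<in> carrier_mat m m" by (rule carrier_matI[OF r c])
  have "Q * R = 1\<^sub>m m" by (simp only: R1 dq)
  moreover have "R * Q = 1\<^sub>m m" by (simp only: R2 r)
  ultimately show ?thesis using that RC by blast
qed

lemma zero_col_not_inv:
  fixes D P Q :: "'k::field mat"
  assumes D: "D \<in> carrier_mat m m"
    and P: "P \<in> carrier_mat m m" "invertible_mat P"
    and Q: "Q \<in> carrier_mat m m" "invertible_mat Q"
    and eq': "D * P = Q" and j: "j < m" and col: "\<forall>k<m. D $$ (k,j) = 0"
  shows False
proof -
  obtain R where R: "R \<in> carrier_mat m m" "Q * R = 1\<^sub>m m" "R * Q = 1\<^sub>m m" using inv_ex[OF Q] by blast
  obtain S where S: "S \<in> carrier_mat m m" "P * S = 1\<^sub>m m" "S * P = 1\<^sub>m m" using inv_ex[OF P] by blast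
  have "D = D * 1\<^sub>m m" by (rule right_mult_one_mat[OF D, symmetric])
  also have "\<dots> = D * (P * S)" by (simp only: S(2))
  also have "\<dots> = (D * P) * S" by (rule assoc_mult_mat[OF D P(1) S(1), symmetric])
  finally have DQS: "D = Q * S" by (simp only: eq')
  have "R * D = R * (Q * S)" by (simp only: DQS)
  also have "\<dots> = (R * Q) * S" by (rule assoc_mult_mat[OF R(1) Q(1) S(1), symmetric])
  also have "\<dots> = S" by (simp only: R(3) left_mult_one_mat[OF S(1)])
  finally have RD: "R * D = S" .
  have "\<forall>k<m. S $$ (k,j) = 0"
  proof (intro allI impI)
    fix k assume "k < m"
    hence "(R * D) $$ (k,j) = 0" using zero_col_mult[OF R(1) D _ j col] by blast
    thus "S $$ (k,j) = 0" by (simp only: RD)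
  qed
  hence "(P * S) $$ (j,j) = 0" using zero_col_mult[OF P(1) S(1) j j] by blast
  hence "(1\<^sub>m m :: 'k mat) $$ (j,j) = 0" by (simp only: S(2))
  thus False using j by simp
qed

lemma zero_row_not_inv:
  fixes D P Q :: "'k::field mat"
  assumes D: "D \<in> carrier_mat m m"
    and P: "P \<in> carrier_mat m m"
    and Q: "Q \<in> carrier_mat m m" "invertible_mat Q"
    and eq': "D * P = Q" and i: "i < m" and row: "\<forall>k<m. D $$ (i,k) = 0"
  shows False
proof -
  obtain R where R: "R \<in> carrier_mat m m" "Q * R = 1\<^sub>m m" "R * Q = 1\<^sub>m m" using inv_ex[OF Q] by blast
  have "\<forall>k<m. Q $$ (i,k) = 0"
  proof (intro allI impI)
    fix k assume "k < m"
    hence "(D * P) $$ (i,k) = 0" using zero_row_mult[OF D P(1) i _ row] by blast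
    thus "Q $$ (i,k) = 0" by (simp only: eq')
  qed
  hence "(Q * R) $$ (i,i) = 0" using zero_row_mult[OF Q(1) R(1) i i] by blast
  hence "(1\<^sub>m m :: 'k mat) $$ (i,i) = 0" by (simp only: R(2))
  thus False using i by simp
qed

lemma blk_nonzero:
  fixes A B P Q :: "'k::field mat"
  assumes A: "A \<in> carrier_mat r c" and B: "B \<in> carrier_mat r2 c2"
    and m1: "r + r2 = m" and m2: "c + c2 = m"
    and P: "P \<in> carrier_mat m m" "invertible_mat P"
    and Q: "Q \<in> carrier_mat m m" "invertible_mat Q"
    and eq: "four_block_mat A (0\<^sub>m r c2) (0\<^sub>m r2 c) B * P = Q"
  shows "(r = 0 \<longleftrightarrow> c = 0) \<and> (r2 = 0 \<longleftrightarrow> c2 = 0)"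
proof -
  define D where "D = four_block_mat A (0\<^sub>m r c2) (0\<^sub>m r2 c) B"
  have D0: "D \<in> carrier_mat (r + r2) (c + c2)" unfolding D_def by (rule four_block_carrier_mat[OF A B])
  hence D: "D \<in> carrier_mat m m" by (simp only: m1 m2)
  have dA: "dim_row A = r" "dim_col A = c" using A by auto
  have dB: "dim_row B = r2" "dim_col B = c2" using B by auto
  have Dij: "D $$ (i,j) = (if i < r then if j < c then A $$ (i,j) else 0
      else if j < c then 0 else B $$ (i - r, j - c))" if "i < m" "j < m" for i j
    unfolding D_def using that dA dB m1 m2 by (simp add: index_mat_four_block)
  have eq': "D * P = Q" using eq unfolding D_def .
  have c1: "c = 0" if "r = 0" 
  proof (rule ccontr)
    assume "c \<noteq> 0"
    hence "\<forall>k<m. D $$ (k,0) = 0" "0 < m" using Dij that m2 by auto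
    thus False using zero_col_not_inv[OF D P Q eq'] by blast
  qed
  have c2: "r = 0" if "c = 0" 
  proof (rule ccontr)
    assume "r \<noteq> 0"
    hence "\<forall>k<m. D $$ (0,k) = 0" "0 < m" using Dij that m1 by auto
    thus False using zero_row_not_inv[OF D P(1) Q eq'] by blast
  qed
  have c3: "c2 = 0" if "r2 = 0" 
  proof (rule ccontr)
    assume "c2 \<noteq> 0"
    hence "\<forall>k<m. D $$ (k,c) = 0" "c < m" using Dij that m1 m2 by auto
    thus False using zero_col_not_inv[OF D P Q eq'] by blast
  qed
  have c4: "r2 = 0" if "c2 = 0" 
  proof (rule ccontr)
    assume "r2 \<noteq> 0"
    hence "\<forall>k<m. D $$ (r,k) = 0" "r < m" using Dij that m1 m2 by auto
    thus False using zero_row_not_inv[OF D P(1) Q eq'] by blast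
  qed
  show ?thesis using c1 c2 c3 c4 by blast
qed

lemma blk_one:
  fixes A B :: "'k::field mat"
  assumes A: "A \<in> carrier_mat r r" and B: "B \<in> carrier_mat r2 r2"
    and eq: "four_block_mat A (0\<^sub>m r r2) (0\<^sub>m r2 r) B = 1\<^sub>m (r + r2)"
  shows "A = 1\<^sub>m r \<and> B = 1\<^sub>m r2"
proof
  have dA: "dim_row A = r" "dim_col A = r" using A by auto
  have dB: "dim_row B = r2" "dim_col B = r2" using B by auto
  show "A = 1\<^sub>m r"
  proof (rule eq_matI)
    fix i j assume ij: "i < dim_row (1\<^sub>m r :: 'k mat)" "j < dim_col (1\<^sub>m r :: 'k mat)"
    have "four_block_mat A (0\<^sub>m r r2) (0\<^sub>m r2 r) B $$ (i,j) = A $$ (i,j)"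
      using ij dA dB by (simp add: index_mat_four_block)
    thus "A $$ (i,j) = 1\<^sub>m r $$ (i,j)" using eq ij by simp
  qed (use dA in auto)
  show "B = 1\<^sub>m r2"
  proof (rule eq_matI)
    fix i j assume ij: "i < dim_row (1\<^sub>m r2 :: 'k mat)" "j < dim_col (1\<^sub>m r2 :: 'k mat)"
    have "four_block_mat A (0\<^sub>m r r2) (0\<^sub>m r2 r) B $$ (i + r,j + r) = B $$ (i,j)"
      using ij dA dB by (simp add: index_mat_four_block)
    moreover have "(1\<^sub>m (r + r2) :: 'k mat) $$ (i + r, j + r) = 1\<^sub>m r2 $$ (i,j)" using ij by simp
    ultimately show "B $$ (i,j) = 1\<^sub>m r2 $$ (i,j)" using eq by simp
  qed (use dB in auto)
qed

lemma blk_id: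
  fixes D P :: "'k::field mat"
  assumes D: "D \<in> carrier_mat m m" and P: "P \<in> carrier_mat m m" "invertible_mat P"
    and eq: "D * P = P"
  shows "D = 1\<^sub>m m"
proof -
  obtain S where S: "S \<in> carrier_mat m m" "P * S = 1\<^sub>m m" "S * P = 1\<^sub>m m" using inv_ex[OF P] by blast
  have "D = D * 1\<^sub>m m" by (rule right_mult_one_mat[OF D, symmetric])
  also have "\<dots> = D * (P * S)" by (simp only: S(2))
  also have "\<dots> = (D * P) * S" by (rule assoc_mult_mat[OF D P(1) S(1), symmetric])
  also have "\<dots> = 1\<^sub>m m" by (simp only: eq S(2))
  finally show ?thesis .
qed

definition is_functor :: "('o2, 'm2) cat \<Rightarrow> ('o, 'm) cat \<Rightarrow> ('o2 \<Rightarrow> 'o) \<Rightarrow> ('m2 \<Rightarrow> 'm) \<Rightarrow> bool" where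
  "is_functor B A Fo Fm \<longleftrightarrow> (\<forall>X\<in>Obj B. Fo X \<in> Obj A) \<and>
     (\<forall>a\<in>Arr B. Fm a \<in> Arr A \<and> Dom A (Fm a) = Fo (Dom B a) \<and> Cod A (Fm a) = Fo (Cod B a)) \<and>
     (\<forall>X\<in>Obj B. Fm (Id B X) = Id A (Fo X)) \<and>
     (\<forall>a\<in>Arr B. \<forall>b\<in>Arr B. Cod B a = Dom B b \<longrightarrow> Fm (Comp B b a) = Comp A (Fm b) (Fm a))"

lemma pullback_module:
  fixes M :: "('m, 'o, 'k::field) module"
  assumes M: "is_module A M" and F: "is_functor B A Fo Fm"
  shows "is_module B (pullback Fo Fm M)"
  unfolding is_module_def pullback_def
proof (intro conjI ballI impI)
  fix a assume a: "a \<in> Arr B"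
  hence "snd M (Fm a) \<in> carrier_mat (fst M (Cod A (Fm a))) (fst M (Dom A (Fm a)))"
    using M F unfolding is_module_def is_functor_def by blast
  thus "snd (fst M \<circ> Fo, snd M \<circ> Fm) a \<in> carrier_mat (fst (fst M \<circ> Fo, snd M \<circ> Fm) (Cod B a))
            (fst (fst M \<circ> Fo, snd M \<circ> Fm) (Dom B a))"
    using F a unfolding is_functor_def by simp
next
  fix x assume x: "x \<in> Obj B"
  thus "snd (fst M \<circ> Fo, snd M \<circ> Fm) (Id B x) = 1\<^sub>m (fst (fst M \<circ> Fo, snd M \<circ> Fm) x)"
    using M F unfolding is_module_def is_functor_def by simp
next
  fix f g assume f: "f \<in> Arr B" and g: "g \<in> Arr B" and fg: "Cod B f = Dom B g"
  have "Fm (Comp B g f) = Comp A (Fm g) (Fm f)" using F f g fg unfolding is_functor_def by blast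
  moreover have "Fm f \<in> Arr A" "Fm g \<in> Arr A" "Cod A (Fm f) = Dom A (Fm g)"
    using F f g fg unfolding is_functor_def by auto
  ultimately show "snd (fst M \<circ> Fo, snd M \<circ> Fm) (Comp B g f) =
       snd (fst M \<circ> Fo, snd M \<circ> Fm) g * snd (fst M \<circ> Fo, snd M \<circ> Fm) f"
    using M unfolding is_module_def by simp
qed


lemma key_arrow:
  fixes M :: "('m, 'o, 'k::field) module" and N1 N2 :: "('m2, 'o2, 'k) module"
  assumes A: "\<forall>x\<in>Obj A. Id A x \<in> Arr A \<and> Dom A (Id A x) = x \<and> Cod A (Id A x) = x" and M: "is_module A M" and F: "is_functor B A Fo Fm"
    and BO: "\<forall>a\<in>Arr B. Dom B a \<in> Obj B \<and> Cod B a \<in> Obj B"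
    and N1: "is_module B N1" and N2: "is_module B N2"
    and phi: "\<forall>x\<in>Obj B. \<phi> x \<in> carrier_mat (fst (module_dsum N1 N2) x) (fst (pullback Fo Fm M) x) \<and> invertible_mat (\<phi> x)"
    and nat: "\<forall>f\<in>Arr B. \<phi> (Cod B f) * snd (pullback Fo Fm M) f = snd (module_dsum N1 N2) f * \<phi> (Dom B f)"
    and a: "a \<in> Arr B" and y: "y \<in> Obj A" and Fa: "Fm a = Id A y"
  shows "(fst N1 (Cod B a) = 0 \<longleftrightarrow> fst N1 (Dom B a) = 0) \<and>
     (fst N2 (Cod B a) = 0 \<longleftrightarrow> fst N2 (Dom B a) = 0) \<and>
     (Dom B a = Cod B a \<longrightarrow> snd N1 a = 1\<^sub>m (fst N1 (Dom B a)) \<and> snd N2 a = 1\<^sub>m (fst N2 (Dom B a)))"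
proof -
  have objB: "Dom B a \<in> Obj B" "Cod B a \<in> Obj B" using BO a by auto
  have "Dom A (Fm a) = Fo (Dom B a)" "Cod A (Fm a) = Fo (Cod B a)" using F a unfolding is_functor_def by auto
  moreover have "Dom A (Id A y) = y" "Cod A (Id A y) = y" using A y by auto
  ultimately have Fd: "Fo (Dom B a) = y" and Fc: "Fo (Cod B a) = y" using Fa by auto
  define m where "m = fst M y"
  define r where "r = fst N1 (Cod B a)"
  define c where "c = fst N1 (Dom B a)"
  define r2 where "r2 = fst N2 (Cod B a)"
  define c2 where "c2 = fst N2 (Dom B a)"
  define P where "P = \<phi> (Dom B a)"
  define Q where "Q = \<phi> (Cod B a)"
  have P0: "P \<in> carrier_mat (c + c2) m" "invertible_mat P"
    using phi objB Fd unfolding P_def c_def c2_def m_def module_dsum_def pullback_def by auto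
  have Q0: "Q \<in> carrier_mat (r + r2) m" "invertible_mat Q"
    using phi objB Fc unfolding Q_def r_def r2_def m_def module_dsum_def pullback_def by auto
  have m2: "c + c2 = m" using P0 unfolding invertible_mat_def square_mat.simps by auto
  have m1: "r + r2 = m" using Q0 unfolding invertible_mat_def square_mat.simps by auto
  have P: "P \<in> carrier_mat m m" using P0 m2 by simp
  have Q: "Q \<in> carrier_mat m m" using Q0 m1 by simp
  have A1: "snd N1 a \<in> carrier_mat r c" using N1 a unfolding is_module_def r_def c_def by blast
  have B1: "snd N2 a \<in> carrier_mat r2 c2" using N2 a unfolding is_module_def r2_def c2_def by blast
  have dA: "dim_row (snd N1 a) = r" "dim_col (snd N1 a) = c" using A1 by auto
  have dB: "dim_row (snd N2 a) = r2" "dim_col (snd N2 a) = c2" using B1 by auto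
  have Mid: "snd M (Id A y) = 1\<^sub>m m" using M y unfolding is_module_def m_def by blast
  have "Q * snd (pullback Fo Fm M) a = snd (module_dsum N1 N2) a * P"
    using nat a unfolding P_def Q_def by blast
  moreover have "snd (pullback Fo Fm M) a = 1\<^sub>m m" unfolding pullback_def using Fa Mid by simp
  moreover have "snd (module_dsum N1 N2) a = four_block_mat (snd N1 a) (0\<^sub>m r c2) (0\<^sub>m r2 c) (snd N2 a)"
    unfolding module_dsum_def using dA dB by simp
  moreover have "Q * 1\<^sub>m m = Q" by (rule right_mult_one_mat[OF Q])
  ultimately have eq: "four_block_mat (snd N1 a) (0\<^sub>m r c2) (0\<^sub>m r2 c) (snd N2 a) * P = Q" by simp
  have part1: "(r = 0 \<longleftrightarrow> c = 0) \<and> (r2 = 0 \<longleftrightarrow> c2 = 0)"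
    by (rule blk_nonzero[OF A1 B1 m1 m2 P P0(2) Q Q0(2) eq])
  have part2: "snd N1 a = 1\<^sub>m c \<and> snd N2 a = 1\<^sub>m c2" if dc: "Dom B a = Cod B a"
  proof -
    have rc: "r = c" "r2 = c2" "Q = P" unfolding r_def c_def r2_def c2_def Q_def P_def using dc by auto
    have D: "four_block_mat (snd N1 a) (0\<^sub>m c c2) (0\<^sub>m c2 c) (snd N2 a) \<in> carrier_mat m m"
      using four_block_carrier_mat[OF A1 B1] m1 m2 rc by simp
    have "four_block_mat (snd N1 a) (0\<^sub>m c c2) (0\<^sub>m c2 c) (snd N2 a) = 1\<^sub>m m"
      by (rule blk_id[OF D P P0(2)]) (use eq rc in simp)
    hence "four_block_mat (snd N1 a) (0\<^sub>m c c2) (0\<^sub>m c2 c) (snd N2 a) = 1\<^sub>m (c + c2)" using m2 by simp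
    moreover have "snd N1 a \<in> carrier_mat c c" using A1 rc by simp
    moreover have "snd N2 a \<in> carrier_mat c2 c2" using B1 rc by simp
    ultimately show ?thesis using blk_one by blast
  qed
  show ?thesis using part1 part2 unfolding r_def c_def r2_def c2_def by blast
qed


lemma abstract_main:
  fixes M :: "('m, 'o, 'k::field) module" and B :: "('o2, 'm2) cat"
  assumes A: "\<forall>x\<in>Obj A. Id A x \<in> Arr A \<and> Dom A (Id A x) = x \<and> Cod A (Id A x) = x" and M: "indecomposable A M" and F: "is_functor B A Fo Fm"
    and BO: "\<forall>a\<in>Arr B. Dom B a \<in> Obj B \<and> Cod B a \<in> Obj B"
    and SO: "\<forall>x\<in>Obj A. So x \<in> Obj B \<and> Fo (So x) = x"
    and SA: "\<forall>f\<in>Arr A. Sm f \<in> Arr B \<and> Dom B (Sm f) = So (Dom A f) \<and> Cod B (Sm f) = So (Cod A f) \<and> Fm (Sm f) = f"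
    and SC: "\<forall>f\<in>Arr A. \<forall>g\<in>Arr A. Cod A f = Dom A g \<longrightarrow> Sm (Comp A g f) = Comp B (Sm g) (Sm f)"
    and U: "\<forall>X\<in>Obj B. \<exists>a\<in>Arr B. ((Dom B a = X \<and> Cod B a = So (Fo X)) \<or> (Dom B a = So (Fo X) \<and> Cod B a = X))
               \<and> Fm a = Id A (Fo X)"
  shows "indecomposable B (pullback Fo Fm M)"
proof -
  have Mm: "is_module A M" and Mnz: "nonzero_module A M"
    and Mind: "\<not> (\<exists>M1 M2. is_module A M1 \<and> is_module A M2 \<and> nonzero_module A M1 \<and> nonzero_module A M2 \<and>
              module_iso A M (module_dsum M1 M2))" using M unfolding indecomposable_def by auto
  have mod: "is_module B (pullback Fo Fm M)" by (rule pullback_module[OF Mm F])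
  have nz: "nonzero_module B (pullback Fo Fm M)"
  proof -
    obtain x where x: "x \<in> Obj A" "fst M x \<noteq> 0" using Mnz unfolding nonzero_module_def by blast
    hence "So x \<in> Obj B" "fst (pullback Fo Fm M) (So x) \<noteq> 0" using SO unfolding pullback_def by auto
    thus ?thesis unfolding nonzero_module_def by blast
  qed
  have nodec: False if N1: "is_module B N1" and N2: "is_module B N2" and nz1: "nonzero_module B N1"
    and nz2: "nonzero_module B N2" and iso: "module_iso B (pullback Fo Fm M) (module_dsum N1 N2)" for N1 N2
  proof -
    obtain \<phi> where phi: "\<forall>x\<in>Obj B. \<phi> x \<in> carrier_mat (fst (module_dsum N1 N2) x) (fst (pullback Fo Fm M) x) \<and> invertible_mat (\<phi> x)"
      and nat: "\<forall>f\<in>Arr B. \<phi> (Cod B f) * snd (pullback Fo Fm M) f = snd (module_dsum N1 N2) f * \<phi> (Dom B f)"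
      using iso unfolding module_iso_def by blast
    have K: "(fst N1 (Cod B a) = 0 \<longleftrightarrow> fst N1 (Dom B a) = 0) \<and>
     (fst N2 (Cod B a) = 0 \<longleftrightarrow> fst N2 (Dom B a) = 0) \<and>
     (Dom B a = Cod B a \<longrightarrow> snd N1 a = 1\<^sub>m (fst N1 (Dom B a)) \<and> snd N2 a = 1\<^sub>m (fst N2 (Dom B a)))"
      if "a \<in> Arr B" "y \<in> Obj A" "Fm a = Id A y" for a y
      by (rule key_arrow[OF A Mm F BO N1 N2 phi nat that])
    have Aid: "Id A x \<in> Arr A \<and> Dom A (Id A x) = x \<and> Cod A (Id A x) = x" if "x \<in> Obj A" for x
      using A that by blast
    have Ncomm: "\<forall>x\<in>Obj A. snd N (Sm (Id A x)) = 1\<^sub>m (fst N (So x))"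
      if "N = N1 \<or> N = N2" for N
    proof
      fix x assume x: "x \<in> Obj A"
      have a: "Sm (Id A x) \<in> Arr B" "Dom B (Sm (Id A x)) = So x" "Cod B (Sm (Id A x)) = So x"
        "Fm (Sm (Id A x)) = Id A x" using SA Aid[OF x] by auto
      show "snd N (Sm (Id A x)) = 1\<^sub>m (fst N (So x))" using K[OF a(1) x a(4)] a that by auto
    qed
    have Pmod: "is_module A (pullback So Sm N)" if "N = N1 \<or> N = N2" for N
    proof -
      have NB: "is_module B N" using that N1 N2 by blast
      show ?thesis unfolding is_module_def pullback_def
      proof (intro conjI ballI impI)
        fix f assume f: "f \<in> Arr A"
        have sf: "Sm f \<in> Arr B" "Dom B (Sm f) = So (Dom A f)" "Cod B (Sm f) = So (Cod A f)" using SA f by auto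
        have "snd N (Sm f) \<in> carrier_mat (fst N (Cod B (Sm f))) (fst N (Dom B (Sm f)))"
          using NB sf(1) unfolding is_module_def by blast
        thus "snd (fst N \<circ> So, snd N \<circ> Sm) f \<in> carrier_mat (fst (fst N \<circ> So, snd N \<circ> Sm) (Cod A f))
            (fst (fst N \<circ> So, snd N \<circ> Sm) (Dom A f))" using sf by simp
      next
        fix x assume "x \<in> Obj A"
        thus "snd (fst N \<circ> So, snd N \<circ> Sm) (Id A x) = 1\<^sub>m (fst (fst N \<circ> So, snd N \<circ> Sm) x)"
          using Ncomm[OF that] by simp
      next
        fix f g assume f: "f \<in> Arr A" and g: "g \<in> Arr A" and fg: "Cod A f = Dom A g"
        have "Sm (Comp A g f) = Comp B (Sm g) (Sm f)" using SC f g fg by blast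
        moreover have "Sm f \<in> Arr B" "Sm g \<in> Arr B" "Cod B (Sm f) = Dom B (Sm g)" using SA f g fg by auto
        ultimately show "snd (fst N \<circ> So, snd N \<circ> Sm) (Comp A g f) =
          snd (fst N \<circ> So, snd N \<circ> Sm) g * snd (fst N \<circ> So, snd N \<circ> Sm) f"
          using NB unfolding is_module_def by simp
      qed
    qed
    have Pnz: "nonzero_module A (pullback So Sm N)" if hN: "N = N1 \<or> N = N2" and hnz: "nonzero_module B N" for N
    proof -
      obtain X where X: "X \<in> Obj B" "fst N X \<noteq> 0" using hnz unfolding nonzero_module_def by blast
      obtain a where a: "a \<in> Arr B" "(Dom B a = X \<and> Cod B a = So (Fo X)) \<or> (Dom B a = So (Fo X) \<and> Cod B a = X)"
        "Fm a = Id A (Fo X)" using U X(1) by blast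
      have FX: "Fo X \<in> Obj A" using F X(1) unfolding is_functor_def by blast
      have "fst N (So (Fo X)) \<noteq> 0" using K[OF a(1) FX a(3)] a(2) X(2) hN by auto
      thus ?thesis using FX unfolding nonzero_module_def pullback_def by auto
    qed
    have "module_iso A M (module_dsum (pullback So Sm N1) (pullback So Sm N2))"
      unfolding module_iso_def
    proof (intro exI[of _ "\<lambda>x. \<phi> (So x)"] conjI ballI)
      fix x assume x: "x \<in> Obj A"
      have "\<phi> (So x) \<in> carrier_mat (fst (module_dsum N1 N2) (So x)) (fst (pullback Fo Fm M) (So x))"
        "invertible_mat (\<phi> (So x))" using phi SO x by auto
      moreover have "fst (module_dsum N1 N2) (So x) = fst (module_dsum (pullback So Sm N1) (pullback So Sm N2)) x"
        unfolding module_dsum_def pullback_def by simp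
      moreover have "fst (pullback Fo Fm M) (So x) = fst M x" unfolding pullback_def using SO x by simp
      ultimately show "\<phi> (So x) \<in> carrier_mat (fst (module_dsum (pullback So Sm N1) (pullback So Sm N2)) x) (fst M x)"
        "invertible_mat (\<phi> (So x))" by simp_all
    next
      fix f assume f: "f \<in> Arr A"
      have sf: "Sm f \<in> Arr B" "Dom B (Sm f) = So (Dom A f)" "Cod B (Sm f) = So (Cod A f)" "Fm (Sm f) = f"
        using SA f by auto
      have "\<phi> (Cod B (Sm f)) * snd (pullback Fo Fm M) (Sm f) = snd (module_dsum N1 N2) (Sm f) * \<phi> (Dom B (Sm f))"
        using nat sf(1) by blast
      moreover have "snd (pullback Fo Fm M) (Sm f) = snd M f" unfolding pullback_def using sf by simp
      moreover have "snd (module_dsum N1 N2) (Sm f) = snd (module_dsum (pullback So Sm N1) (pullback So Sm N2)) f"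
        unfolding module_dsum_def pullback_def by simp
      ultimately show "\<phi> (So (Cod A f)) * snd M f = snd (module_dsum (pullback So Sm N1) (pullback So Sm N2)) f * \<phi> (So (Dom A f))"
        using sf by simp
    qed
    thus False using Mind Pmod Pnz nz1 nz2 by blast
  qed
  show ?thesis unfolding indecomposable_def using mod nz nodec by blast
qed



lemma del_nth_length: "i < length xs \<Longrightarrow> length (del_nth i xs) = length xs - 1"
  unfolding del_nth_def by simp

lemma del_nth_nth: "i < length xs \<Longrightarrow> j < length xs - 1 \<Longrightarrow>
   del_nth i xs ! j = xs ! (if j < i then j else Suc j)"
  unfolding del_nth_def by (auto simp: nth_append min_def)

lemma del_nth_map: "del_nth i (map f xs) = map f (del_nth i xs)"
  unfolding del_nth_def by (simp add: take_map drop_map)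

lemma del_nth_map2: "length xs = length ys \<Longrightarrow>
   del_nth i (map2 f xs ys) = map2 f (del_nth i xs) (del_nth i ys)"
  unfolding del_nth_def by (simp add: take_map drop_map take_zip drop_zip zip_append)

lemma face_fst: "fst (face_obj C i X) = del_nth i (fst X)"
  unfolding face_obj_def Let_def by simp

lemma face_us_length:
  assumes "length us = Suc n" "i \<le> Suc n"
  shows "length (snd (face_obj C i (xs, us))) = n"
  using assms unfolding face_obj_def Let_def by auto

lemma face_us_nth:
  assumes "length us = Suc n" "i \<le> Suc n" "j < n"
  shows "snd (face_obj C i (xs, us)) ! j = (if i \<noteq> 0 \<and> j < i - 1 then us ! j
     else if i \<noteq> 0 \<and> j = i - 1 then Comp C (us ! i) (us ! (i - 1)) else us ! Suc j)"
proof -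
  consider "i = 0" | "i = Suc n" | "0 < i" "i < Suc n" using assms by linarith
  thus ?thesis
  proof cases
    case 1 thus ?thesis using assms unfolding face_obj_def Let_def by (simp add: nth_tl)
  next
    case 2 thus ?thesis using assms unfolding face_obj_def Let_def by (simp add: nth_butlast)
  next
    case 3
    have "snd (face_obj C i (xs, us)) = take (i - 1) us @ [Comp C (us ! i) (us ! (i - 1))] @ drop (Suc i) us"
      using 3 assms unfolding face_obj_def Let_def by simp
    thus ?thesis using 3 assms by (auto simp: nth_append min_def)
  qed
qed


lemma catD:
  assumes "is_category C"
  shows "\<And>f. f \<in> Arr C \<Longrightarrow> Dom C f \<in> Obj C \<and> Cod C f \<in> Obj C"
    and "\<And>x. x \<in> Obj C \<Longrightarrow> Id C x \<in> Arr C \<and> Dom C (Id C x) = x \<and> Cod C (Id C x) = x"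
    and "\<And>f g. f \<in> Arr C \<Longrightarrow> g \<in> Arr C \<Longrightarrow> Cod C f = Dom C g \<Longrightarrow>
        Comp C g f \<in> Arr C \<and> Dom C (Comp C g f) = Dom C f \<and> Cod C (Comp C g f) = Cod C g"
    and "\<And>f. f \<in> Arr C \<Longrightarrow> Comp C f (Id C (Dom C f)) = f"
    and "\<And>f. f \<in> Arr C \<Longrightarrow> Comp C (Id C (Cod C f)) f = f"
    and "\<And>f g h. f \<in> Arr C \<Longrightarrow> g \<in> Arr C \<Longrightarrow> h \<in> Arr C \<Longrightarrow> Cod C f = Dom C g \<Longrightarrow> Cod C g = Dom C h \<Longrightarrow>
        Comp C h (Comp C g f) = Comp C (Comp C h g) f"
  using assms unfolding is_category_def by blast+

lemma set_del_nth: "set (del_nth i xs) \<subseteq> set xs"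
  unfolding del_nth_def using set_take_subset set_drop_subset by fastforce

lemma E_obj_iff: "(xs, us) \<in> E_obj C n \<longleftrightarrow> length xs = Suc n \<and> length us = n \<and> set xs \<subseteq> Obj C \<and>
      (\<forall>j<n. us ! j \<in> Arr C \<and> Dom C (us ! j) = xs ! j \<and> Cod C (us ! j) = xs ! Suc j)"
  unfolding E_obj_def by simp

lemma face_obj_mem:
  assumes C: "is_category C" and X: "X \<in> E_obj C (Suc n)" and i: "i \<le> Suc n"
  shows "face_obj C i X \<in> E_obj C n"
proof -
  define xs where "xs = fst X"
  define us where "us = snd X"
  have Xe: "X = (xs, us)" unfolding xs_def us_def by simp
  have H: "length xs = Suc (Suc n) \<and> length us = Suc n \<and> set xs \<subseteq> Obj C \<and>
      (\<forall>j<Suc n. us ! j \<in> Arr C \<and> Dom C (us ! j) = xs ! j \<and> Cod C (us ! j) = xs ! Suc j)"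
    using X[unfolded Xe E_obj_iff] .
  have lx: "length xs = Suc (Suc n)" using H by (rule conjunct1)
  have lu: "length us = Suc n" using H by (metis conjunct1 conjunct2)
  have sx: "set xs \<subseteq> Obj C" using H by (metis conjunct1 conjunct2)
  have u: "\<And>j. j < Suc n \<Longrightarrow> us ! j \<in> Arr C \<and> Dom C (us ! j) = xs ! j \<and> Cod C (us ! j) = xs ! Suc j"
    using H by blast
  have il: "i < length xs" using i lx by simp
  let ?xs = "del_nth i xs" and ?us = "snd (face_obj C i (xs, us))"
  have fo: "face_obj C i X = (?xs, ?us)" unfolding Xe by (simp add: face_fst prod_eq_iff)
  have l1: "length ?xs = Suc n" using del_nth_length[OF il] lx by simp
  have l2: "length ?us = n" using face_us_length[OF lu i] .
  have s: "set ?xs \<subseteq> Obj C" using set_del_nth[of i xs] sx by (rule order.trans)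
  have xn: "?xs ! j = xs ! (if j < i then j else Suc j)" if "j < Suc n" for j
  proof -
    have "j < length xs - 1" using that lx by simp
    thus ?thesis by (rule del_nth_nth[OF il])
  qed
  have "?us ! j \<in> Arr C \<and> Dom C (?us ! j) = ?xs ! j \<and> Cod C (?us ! j) = ?xs ! Suc j" if j: "j < n" for j
  proof -
    have un: "?us ! j = (if i \<noteq> 0 \<and> j < i - 1 then us ! j
     else if i \<noteq> 0 \<and> j = i - 1 then Comp C (us ! i) (us ! (i - 1)) else us ! Suc j)"
      by (rule face_us_nth[OF lu i j])
    have x1: "?xs ! j = xs ! (if j < i then j else Suc j)" using xn j by simp
    have x2: "?xs ! Suc j = xs ! (if Suc j < i then Suc j else Suc (Suc j))" using xn j by simp
    consider "i \<noteq> 0" "j < i - 1" | "i \<noteq> 0" "j = i - 1" | "i = 0 \<or> j > i - 1" by linarith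
    thus ?thesis
    proof cases
      case 1 thus ?thesis using un x1 x2 u[of j] j by auto
    next
      case 2
      have ui: "us ! i \<in> Arr C" "Dom C (us ! i) = xs ! i" "Cod C (us ! i) = xs ! Suc i"
        using u[of i] 2 j by auto
      have ui1: "us ! (i-1) \<in> Arr C" "Dom C (us ! (i-1)) = xs ! (i-1)" "Cod C (us ! (i-1)) = xs ! i"
        using u[of "i-1"] 2 j by auto
      have "Comp C (us ! i) (us ! (i - 1)) \<in> Arr C \<and> Dom C (Comp C (us ! i) (us ! (i - 1))) = xs ! (i-1)
         \<and> Cod C (Comp C (us ! i) (us ! (i - 1))) = xs ! Suc i"
        using catD(3)[OF C ui1(1) ui(1)] ui ui1 by simp
      thus ?thesis using un x1 x2 2 by auto
    next
      case 3 thus ?thesis using un x1 x2 u[of "Suc j"] j by auto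
    qed
  qed
  thus ?thesis unfolding fo E_obj_iff using l1 l2 s by blast
qed


lemma E_arr_iff: "(X, Y, fs) \<in> E_arr C n \<longleftrightarrow> X \<in> E_obj C n \<and> Y \<in> E_obj C n \<and> length fs = Suc n \<and>
      (\<forall>j\<le>n. fs ! j \<in> Arr C \<and> Dom C (fs ! j) = fst X ! j \<and> Cod C (fs ! j) = fst Y ! j) \<and>
      (\<forall>j<n. Comp C (snd Y ! j) (fs ! j) = Comp C (fs ! Suc j) (snd X ! j))"
  unfolding E_arr_def by simp

lemma face_arr_mem:
  assumes C: "is_category C" and F: "(X, Y, fs) \<in> E_arr C (Suc n)" and i: "i \<le> Suc n"
  shows "face_arr C i (X, Y, fs) \<in> E_arr C n"
proof -
  have H: "X \<in> E_obj C (Suc n) \<and> Y \<in> E_obj C (Suc n) \<and> length fs = Suc (Suc n) \<and>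
      (\<forall>j\<le>Suc n. fs ! j \<in> Arr C \<and> Dom C (fs ! j) = fst X ! j \<and> Cod C (fs ! j) = fst Y ! j) \<and>
      (\<forall>j<Suc n. Comp C (snd Y ! j) (fs ! j) = Comp C (fs ! Suc j) (snd X ! j))"
    using F[unfolded E_arr_iff] .
  have X: "X \<in> E_obj C (Suc n)" using H by (rule conjunct1)
  have Y: "Y \<in> E_obj C (Suc n)" using H by (metis conjunct1 conjunct2)
  have lf: "length fs = Suc (Suc n)" using H by (metis conjunct1 conjunct2)
  have fj: "\<And>j. j \<le> Suc n \<Longrightarrow> fs ! j \<in> Arr C \<and> Dom C (fs ! j) = fst X ! j \<and> Cod C (fs ! j) = fst Y ! j"
    using H by blast
  have sq: "\<And>j. j < Suc n \<Longrightarrow> Comp C (snd Y ! j) (fs ! j) = Comp C (fs ! Suc j) (snd X ! j)"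
    using H by blast
  define xs where "xs = fst X"
  define us where "us = snd X"
  define ys where "ys = fst Y"
  define vs where "vs = snd Y"
  have Xe: "X = (xs, us)" unfolding xs_def us_def by simp
  have Ye: "Y = (ys, vs)" unfolding ys_def vs_def by simp
  have HX: "length xs = Suc (Suc n) \<and> length us = Suc n \<and> set xs \<subseteq> Obj C \<and>
      (\<forall>j<Suc n. us ! j \<in> Arr C \<and> Dom C (us ! j) = xs ! j \<and> Cod C (us ! j) = xs ! Suc j)"
    using X[unfolded Xe E_obj_iff] .
  have HY: "length ys = Suc (Suc n) \<and> length vs = Suc n \<and> set ys \<subseteq> Obj C \<and>
      (\<forall>j<Suc n. vs ! j \<in> Arr C \<and> Dom C (vs ! j) = ys ! j \<and> Cod C (vs ! j) = ys ! Suc j)"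
    using Y[unfolded Ye E_obj_iff] .
  have lu: "length us = Suc n" using HX by (metis conjunct1 conjunct2)
  have lv: "length vs = Suc n" using HY by (metis conjunct1 conjunct2)
  have lx: "length xs = Suc (Suc n)" using HX by (rule conjunct1)
  have ly: "length ys = Suc (Suc n)" using HY by (rule conjunct1)
  have u: "\<And>j. j < Suc n \<Longrightarrow> us ! j \<in> Arr C \<and> Dom C (us ! j) = xs ! j \<and> Cod C (us ! j) = xs ! Suc j"
    using HX by blast
  have v: "\<And>j. j < Suc n \<Longrightarrow> vs ! j \<in> Arr C \<and> Dom C (vs ! j) = ys ! j \<and> Cod C (vs ! j) = ys ! Suc j"
    using HY by blast
  have il: "i < length fs" using i lf by simp
  have ilx: "i < length xs" using i lx by simp
  have ily: "i < length ys" using i ly by simp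
  let ?fs = "del_nth i fs"
  have fo: "face_arr C i (X, Y, fs) = (face_obj C i X, face_obj C i Y, ?fs)"
    unfolding face_arr_def by simp
  have l1: "length ?fs = Suc n" using del_nth_length[OF il] lf by simp
  have fn: "?fs ! j = fs ! (if j < i then j else Suc j)" if "j \<le> n" for j
  proof -
    have "j < length fs - 1" using that lf by simp
    thus ?thesis by (rule del_nth_nth[OF il])
  qed
  have xn: "fst (face_obj C i X) ! j = xs ! (if j < i then j else Suc j)" if "j \<le> n" for j
  proof -
    have "j < length xs - 1" using that lx by simp
    thus ?thesis unfolding face_fst xs_def[symmetric] by (rule del_nth_nth[OF ilx])
  qed
  have yn: "fst (face_obj C i Y) ! j = ys ! (if j < i then j else Suc j)" if "j \<le> n" for j
  proof -
    have "j < length ys - 1" using that ly by simp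
    thus ?thesis unfolding face_fst ys_def[symmetric] by (rule del_nth_nth[OF ily])
  qed
  have P1: "?fs ! j \<in> Arr C \<and> Dom C (?fs ! j) = fst (face_obj C i X) ! j \<and> Cod C (?fs ! j) = fst (face_obj C i Y) ! j"
    if j: "j \<le> n" for j
  proof -
    have "(if j < i then j else Suc j) \<le> Suc n" using j by simp
    thus ?thesis using fj[of "if j < i then j else Suc j"] fn[OF j] xn[OF j] yn[OF j] unfolding xs_def ys_def
      by simp
  qed
  have P2: "Comp C (snd (face_obj C i Y) ! j) (?fs ! j) = Comp C (?fs ! Suc j) (snd (face_obj C i X) ! j)"
    if j: "j < n" for j
  proof -
    have un: "snd (face_obj C i X) ! j = (if i \<noteq> 0 \<and> j < i - 1 then us ! j
     else if i \<noteq> 0 \<and> j = i - 1 then Comp C (us ! i) (us ! (i - 1)) else us ! Suc j)"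
      unfolding Xe by (rule face_us_nth[OF lu i j])
    have vn: "snd (face_obj C i Y) ! j = (if i \<noteq> 0 \<and> j < i - 1 then vs ! j
     else if i \<noteq> 0 \<and> j = i - 1 then Comp C (vs ! i) (vs ! (i - 1)) else vs ! Suc j)"
      unfolding Ye by (rule face_us_nth[OF lv i j])
    have f1: "?fs ! j = fs ! (if j < i then j else Suc j)" using fn j by simp
    have f2: "?fs ! Suc j = fs ! (if Suc j < i then Suc j else Suc (Suc j))" using fn j by simp
    consider "i \<noteq> 0" "j < i - 1" | "i \<noteq> 0" "j = i - 1" | "i = 0 \<or> j > i - 1" by linarith
    thus ?thesis
    proof cases
      case 1 thus ?thesis using un vn f1 f2 sq[of j] j unfolding us_def vs_def by auto
    next
      case 2
      have ji: "j = i - 1" "i \<le> n" "Suc j = i" using 2 j by auto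
      have ui: "us ! i \<in> Arr C" "Dom C (us ! i) = xs ! i" "Cod C (us ! i) = xs ! Suc i"
        using u[of i] ji by auto
      have ui1: "us ! (i-1) \<in> Arr C" "Dom C (us ! (i-1)) = xs ! (i-1)" "Cod C (us ! (i-1)) = xs ! i"
        using u[of "i-1"] ji by auto
      have vi: "vs ! i \<in> Arr C" "Dom C (vs ! i) = ys ! i" "Cod C (vs ! i) = ys ! Suc i"
        using v[of i] ji by auto
      have vi1: "vs ! (i-1) \<in> Arr C" "Dom C (vs ! (i-1)) = ys ! (i-1)" "Cod C (vs ! (i-1)) = ys ! i"
        using v[of "i-1"] ji by auto
      have f0: "fs ! (i-1) \<in> Arr C" "Dom C (fs ! (i-1)) = xs ! (i-1)" "Cod C (fs ! (i-1)) = ys ! (i-1)"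
        using fj[of "i-1"] ji unfolding xs_def ys_def by auto
      have f1': "fs ! i \<in> Arr C" "Dom C (fs ! i) = xs ! i" "Cod C (fs ! i) = ys ! i"
        using fj[of i] ji unfolding xs_def ys_def by auto
      have f2': "fs ! Suc i \<in> Arr C" "Dom C (fs ! Suc i) = xs ! Suc i" "Cod C (fs ! Suc i) = ys ! Suc i"
        using fj[of "Suc i"] ji unfolding xs_def ys_def by auto
      have s1: "Comp C (vs ! (i-1)) (fs ! (i-1)) = Comp C (fs ! i) (us ! (i-1))"
        using sq[of "i-1"] ji unfolding us_def vs_def by auto
      have s2: "Comp C (vs ! i) (fs ! i) = Comp C (fs ! Suc i) (us ! i)"
        using sq[of i] ji unfolding us_def vs_def by auto
      have "Comp C (Comp C (vs ! i) (vs ! (i-1))) (fs ! (i-1))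
          = Comp C (vs ! i) (Comp C (vs ! (i-1)) (fs ! (i-1)))"
        using catD(6)[OF C f0(1) vi1(1) vi(1)] f0 vi1 vi by simp
      also have "\<dots> = Comp C (vs ! i) (Comp C (fs ! i) (us ! (i-1)))" by (simp only: s1)
      also have "\<dots> = Comp C (Comp C (vs ! i) (fs ! i)) (us ! (i-1))"
        using catD(6)[OF C ui1(1) f1'(1) vi(1)] ui1 f1' vi by simp
      also have "\<dots> = Comp C (Comp C (fs ! Suc i) (us ! i)) (us ! (i-1))" by (simp only: s2)
      also have "\<dots> = Comp C (fs ! Suc i) (Comp C (us ! i) (us ! (i-1)))"
        using catD(6)[OF C ui1(1) ui(1) f2'(1)] ui1 ui f2' by simp
      finally have "Comp C (Comp C (vs ! i) (vs ! (i-1))) (fs ! (i-1)) = Comp C (fs ! Suc i) (Comp C (us ! i) (us ! (i-1)))" .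
      moreover have "snd (face_obj C i X) ! j = Comp C (us ! i) (us ! (i - 1))" using un 2 by simp
      moreover have "snd (face_obj C i Y) ! j = Comp C (vs ! i) (vs ! (i - 1))" using vn 2 by simp
      moreover have "?fs ! j = fs ! (i-1)" using f1 ji by simp
      moreover have "?fs ! Suc j = fs ! Suc i" using f2 ji by simp
      ultimately show ?thesis by simp
    next
      case 3
      have "snd (face_obj C i X) ! j = us ! Suc j" using un 3 by auto
      moreover have "snd (face_obj C i Y) ! j = vs ! Suc j" using vn 3 by auto
      moreover have "?fs ! j = fs ! Suc j" using f1 3 by auto
      moreover have "?fs ! Suc j = fs ! Suc (Suc j)" using f2 3 by auto
      moreover have "Comp C (vs ! Suc j) (fs ! Suc j) = Comp C (fs ! Suc (Suc j)) (us ! Suc j)"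
        using sq[of "Suc j"] j unfolding us_def vs_def by simp
      ultimately show ?thesis by simp
    qed
  qed
  have FX: "face_obj C i X \<in> E_obj C n" by (rule face_obj_mem[OF C X i])
  have FY: "face_obj C i Y \<in> E_obj C n" by (rule face_obj_mem[OF C Y i])
  have "(face_obj C i X, face_obj C i Y, ?fs) \<in> E_arr C n"
    unfolding E_arr_iff using FX FY l1 P1 P2 by blast
  thus ?thesis unfolding fo .
qed


lemma E_cat_simps:
  "Obj (E_cat C n) = E_obj C n" "Arr (E_cat C n) = E_arr C n"
  "Dom (E_cat C n) (X, Y, fs) = X" "Cod (E_cat C n) (X, Y, fs) = Y"
  "Id (E_cat C n) X = (X, X, map (Id C) (fst X))"
  "Comp (E_cat C n) (Y', Z, gs) (X, Y, fs) = (X, Z, map2 (Comp C) gs fs)"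
  unfolding E_cat_def by simp_all

lemma trip: "a = (fst a, fst (snd a), snd (snd a))" by simp

lemma E_arr_len: "(X, Y, fs) \<in> E_arr C n \<Longrightarrow> length fs = Suc n"
  unfolding E_arr_iff by (rule conjunct1[OF conjunct2[OF conjunct2]])

lemma E_arr_objs: "(X, Y, fs) \<in> E_arr C n \<Longrightarrow> X \<in> E_obj C n \<and> Y \<in> E_obj C n"
  unfolding E_arr_iff by (rule conjI, erule conjunct1, metis conjunct1 conjunct2)

lemma E_face_functor:
  assumes C: "is_category C" and i: "i \<le> Suc n"
  shows "is_functor (E_cat C (Suc n)) (E_cat C n) (face_obj C i) (face_arr C i)"
  unfolding is_functor_def
proof (intro conjI ballI impI)
  fix X assume "X \<in> Obj (E_cat C (Suc n))"
  thus "face_obj C i X \<in> Obj (E_cat C n)" using face_obj_mem[OF C _ i] unfolding E_cat_simps by blast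
next
  fix a assume a: "a \<in> Arr (E_cat C (Suc n))"
  define X where "X = fst a"
  define Y where "Y = fst (snd a)"
  define fs where "fs = snd (snd a)"
  have ae: "a = (X, Y, fs)" unfolding X_def Y_def fs_def by simp
  have a': "(X, Y, fs) \<in> E_arr C (Suc n)" using a unfolding ae E_cat_simps .
  have fa: "face_arr C i (X, Y, fs) = (face_obj C i X, face_obj C i Y, del_nth i fs)"
    unfolding face_arr_def by simp
  show "face_arr C i a \<in> Arr (E_cat C n)" unfolding ae E_cat_simps by (rule face_arr_mem[OF C a' i])
  show "Dom (E_cat C n) (face_arr C i a) = face_obj C i (Dom (E_cat C (Suc n)) a)"
    unfolding ae fa E_cat_simps ..
  show "Cod (E_cat C n) (face_arr C i a) = face_obj C i (Cod (E_cat C (Suc n)) a)"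
    unfolding ae fa E_cat_simps ..
next
  fix X assume "X \<in> Obj (E_cat C (Suc n))"
  show "face_arr C i (Id (E_cat C (Suc n)) X) = Id (E_cat C n) (face_obj C i X)"
    unfolding E_cat_simps face_arr_def by (simp add: face_fst del_nth_map)
next
  fix a b assume a: "a \<in> Arr (E_cat C (Suc n))" and b: "b \<in> Arr (E_cat C (Suc n))"
    and ab: "Cod (E_cat C (Suc n)) a = Dom (E_cat C (Suc n)) b"
  define X where "X = fst a"
  define Y where "Y = fst (snd a)"
  define fs where "fs = snd (snd a)"
  have ae: "a = (X, Y, fs)" unfolding X_def Y_def fs_def by simp
  define Y' where "Y' = fst b"
  define Z where "Z = fst (snd b)"
  define gs where "gs = snd (snd b)"
  have be: "b = (Y', Z, gs)" unfolding Y'_def Z_def gs_def by simp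
  have YY: "Y = Y'" using ab unfolding ae be E_cat_simps .
  have lf: "length fs = Suc (Suc n)" using a unfolding ae E_cat_simps by (rule E_arr_len)
  have lg: "length gs = Suc (Suc n)" using b unfolding be E_cat_simps by (rule E_arr_len)
  have "del_nth i (map2 (Comp C) gs fs) = map2 (Comp C) (del_nth i gs) (del_nth i fs)"
    using lf lg by (simp add: del_nth_map2)
  thus "face_arr C i (Comp (E_cat C (Suc n)) b a) = Comp (E_cat C n) (face_arr C i b) (face_arr C i a)"
    unfolding ae be E_cat_simps face_arr_def by (simp add: E_cat_simps)
qed

lemma E_BO: "\<forall>a\<in>Arr (E_cat C n). Dom (E_cat C n) a \<in> Obj (E_cat C n) \<and> Cod (E_cat C n) a \<in> Obj (E_cat C n)"
proof
  fix a assume a: "a \<in> Arr (E_cat C n)"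
  define X where "X = fst a"
  define Y where "Y = fst (snd a)"
  define fs where "fs = snd (snd a)"
  have ae: "a = (X, Y, fs)" unfolding X_def Y_def fs_def by simp
  show "Dom (E_cat C n) a \<in> Obj (E_cat C n) \<and> Cod (E_cat C n) a \<in> Obj (E_cat C n)"
    using a unfolding ae E_cat_simps by (rule E_arr_objs)
qed



definition sidx :: "nat \<Rightarrow> nat \<Rightarrow> nat" where "sidx i j = (if j < i then j else j - 1)"

definition sec_list :: "nat \<Rightarrow> nat \<Rightarrow> 'a list \<Rightarrow> 'a list" where
  "sec_list i n xs = map (\<lambda>j. xs ! sidx i j) [0..<Suc (Suc n)]"

definition sec_us :: "('o, 'm) cat \<Rightarrow> nat \<Rightarrow> nat \<Rightarrow> 'o list \<Rightarrow> 'm list \<Rightarrow> 'm list" where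
  "sec_us C i n xs us = map (\<lambda>j. if j < i - 1 then us ! j else if j = i - 1 then Id C (xs ! (i - 1)) else us ! (j - 1)) [0..<Suc n]"

definition sec_obj :: "('o, 'm) cat \<Rightarrow> nat \<Rightarrow> nat \<Rightarrow> ('o, 'm) string_obj \<Rightarrow> ('o, 'm) string_obj" where
  "sec_obj C i n X = (sec_list i n (fst X), sec_us C i n (fst X) (snd X))"

definition sec_arr :: "('o, 'm) cat \<Rightarrow> nat \<Rightarrow> nat \<Rightarrow> ('o, 'm) ladder \<Rightarrow> ('o, 'm) ladder" where
  "sec_arr C i n a = (sec_obj C i n (fst a), sec_obj C i n (fst (snd a)), sec_list i n (snd (snd a)))"

lemma sec_list_length: "length (sec_list i n xs) = Suc (Suc n)"
  unfolding sec_list_def by simp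

lemma sec_list_nth: "j < Suc (Suc n) \<Longrightarrow> sec_list i n xs ! j = xs ! sidx i j"
  unfolding sec_list_def by (simp del: upt_Suc)

lemma sec_us_length: "length (sec_us C i n xs us) = Suc n"
  unfolding sec_us_def by simp

lemma sec_us_nth: "j < Suc n \<Longrightarrow> sec_us C i n xs us ! j =
   (if j < i - 1 then us ! j else if j = i - 1 then Id C (xs ! (i - 1)) else us ! (j - 1))"
  unfolding sec_us_def by (simp del: upt_Suc)

lemma sidx_le: "j < Suc (Suc n) \<Longrightarrow> i \<le> Suc n \<Longrightarrow> sidx i j \<le> Suc n"
  unfolding sidx_def by auto

lemma sec_obj_mem:
  assumes C: "is_category C" and X: "X \<in> E_obj C n" and i: "i \<le> Suc n"
  shows "sec_obj C i n X \<in> E_obj C (Suc n)"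
proof -
  define xs where "xs = fst X"
  define us where "us = snd X"
  have Xe: "X = (xs, us)" unfolding xs_def us_def by simp
  have HX: "length xs = Suc n \<and> length us = n \<and> set xs \<subseteq> Obj C \<and>
      (\<forall>j<n. us ! j \<in> Arr C \<and> Dom C (us ! j) = xs ! j \<and> Cod C (us ! j) = xs ! Suc j)"
    using X[unfolded Xe E_obj_iff] .
  have lx: "length xs = Suc n" using HX by (rule conjunct1)
  have sx: "set xs \<subseteq> Obj C" using HX by (metis conjunct1 conjunct2)
  have u: "\<And>j. j < n \<Longrightarrow> us ! j \<in> Arr C \<and> Dom C (us ! j) = xs ! j \<and> Cod C (us ! j) = xs ! Suc j"
    using HX by blast
  have xo: "xs ! k \<in> Obj C" if "k \<le> n" for k
  proof -
    have "xs ! k \<in> set xs" using that lx by simp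
    thus ?thesis using sx by (rule subsetD[rotated])
  qed
  have se: "sec_obj C i n X = (sec_list i n xs, sec_us C i n xs us)" unfolding sec_obj_def xs_def us_def by simp
  have s1: "set (sec_list i n xs) \<subseteq> Obj C"
  proof
    fix x assume "x \<in> set (sec_list i n xs)"
    then obtain j where j: "j < Suc (Suc n)" "x = sec_list i n xs ! j"
      by (metis in_set_conv_nth sec_list_length)
    hence "x = xs ! sidx i j" using sec_list_nth by metis
    moreover have "sidx i j \<le> n" using j(1) i unfolding sidx_def by auto
    ultimately show "x \<in> Obj C" using xo by simp
  qed
  have s2: "sec_us C i n xs us ! j \<in> Arr C \<and> Dom C (sec_us C i n xs us ! j) = sec_list i n xs ! j \<and>
      Cod C (sec_us C i n xs us ! j) = sec_list i n xs ! Suc j" if j: "j < Suc n" for j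
  proof -
    have un: "sec_us C i n xs us ! j =
      (if j < i - 1 then us ! j else if j = i - 1 then Id C (xs ! (i - 1)) else us ! (j - 1))"
      using sec_us_nth[OF j] .
    have x1: "sec_list i n xs ! j = xs ! sidx i j" by (rule sec_list_nth) (use j in simp)
    have x2: "sec_list i n xs ! Suc j = xs ! sidx i (Suc j)" by (rule sec_list_nth) (use j in simp)
    consider "j < i - 1" | "j = i - 1" | "j > i - 1" by linarith
    thus ?thesis
    proof cases
      case 1
      hence "j < n" using i by linarith
      thus ?thesis using un x1 x2 u[of j] 1 unfolding sidx_def by auto
    next
      case 2
      have "xs ! (i - 1) \<in> Obj C" using xo i by simp
      hence "Id C (xs ! (i - 1)) \<in> Arr C \<and> Dom C (Id C (xs ! (i - 1))) = xs ! (i - 1) \<and> Cod C (Id C (xs ! (i - 1))) = xs ! (i - 1)"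
        by (rule catD(2)[OF C])
      moreover have "sidx i j = i - 1" "sidx i (Suc j) = i - 1" using 2 unfolding sidx_def by auto
      ultimately show ?thesis using un x1 x2 2 by simp
    next
      case 3
      have "sidx i j = j - 1" "sidx i (Suc j) = j" "j - 1 < n" "Suc (j - 1) = j" using 3 j unfolding sidx_def by auto
      thus ?thesis using un x1 x2 3 u[of "j - 1"] by simp
    qed
  qed
  show ?thesis unfolding se E_obj_iff using sec_list_length[of i n xs] sec_us_length[of C i n xs us] s1 s2 by blast
qed

lemma face_sec_obj:
  assumes C: "is_category C" and X: "X \<in> E_obj C n" and i: "i \<le> Suc n"
  shows "face_obj C i (sec_obj C i n X) = X"
proof -
  define xs where "xs = fst X"
  define us where "us = snd X"
  have Xe: "X = (xs, us)" unfolding xs_def us_def by simp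
  have HX: "length xs = Suc n \<and> length us = n \<and> set xs \<subseteq> Obj C \<and>
      (\<forall>j<n. us ! j \<in> Arr C \<and> Dom C (us ! j) = xs ! j \<and> Cod C (us ! j) = xs ! Suc j)"
    using X[unfolded Xe E_obj_iff] .
  have lx: "length xs = Suc n" using HX by (rule conjunct1)
  have lu: "length us = n" using HX by (metis conjunct1 conjunct2)
  have u: "\<And>j. j < n \<Longrightarrow> us ! j \<in> Arr C \<and> Dom C (us ! j) = xs ! j \<and> Cod C (us ! j) = xs ! Suc j"
    using HX by blast
  have se: "sec_obj C i n X = (sec_list i n xs, sec_us C i n xs us)" unfolding sec_obj_def xs_def us_def by simp
  have il: "i < length (sec_list i n xs)" unfolding sec_list_length using i by simp
  have f1: "del_nth i (sec_list i n xs) = xs"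
  proof (rule nth_equalityI)
    show "length (del_nth i (sec_list i n xs)) = length xs" using del_nth_length[OF il] lx by (simp add: sec_list_length)
    fix k assume k: "k < length (del_nth i (sec_list i n xs))"
    hence k': "k < length (sec_list i n xs) - 1" using del_nth_length[OF il] by simp
    have "del_nth i (sec_list i n xs) ! k = sec_list i n xs ! (if k < i then k else Suc k)"
      by (rule del_nth_nth[OF il k'])
    also have "\<dots> = xs ! sidx i (if k < i then k else Suc k)" using k' by (simp add: sec_list_length sec_list_nth)
    also have "sidx i (if k < i then k else Suc k) = k" unfolding sidx_def by auto
    finally show "del_nth i (sec_list i n xs) ! k = xs ! k" .
  qed
  have f2: "snd (face_obj C i (sec_list i n xs, sec_us C i n xs us)) = us"
  proof (rule nth_equalityI)
    show "length (snd (face_obj C i (sec_list i n xs, sec_us C i n xs us))) = length us"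
      using face_us_length[OF sec_us_length[of C i n xs us] i, of C "sec_list i n xs"] lu by simp
    fix k assume k: "k < length (snd (face_obj C i (sec_list i n xs, sec_us C i n xs us)))"
    hence k': "k < n" using face_us_length[OF sec_us_length[of C i n xs us] i, of C "sec_list i n xs"] by simp
    let ?u = "sec_us C i n xs us"
    have e: "snd (face_obj C i (sec_list i n xs, ?u)) ! k = (if i \<noteq> 0 \<and> k < i - 1 then ?u ! k
     else if i \<noteq> 0 \<and> k = i - 1 then Comp C (?u ! i) (?u ! (i - 1)) else ?u ! Suc k)"
      by (rule face_us_nth[OF sec_us_length i k'])
    consider "i \<noteq> 0" "k < i - 1" | "i \<noteq> 0" "k = i - 1" | "i = 0 \<or> k > i - 1" by linarith
    thus "snd (face_obj C i (sec_list i n xs, ?u)) ! k = us ! k"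
    proof cases
      case 1 thus ?thesis using e sec_us_nth[of k n C i xs us] k' by simp
    next
      case 2
      have iS: "i < Suc n" "\<not> i < i - 1" "i \<noteq> i - 1" using k' 2 by linarith+
      have a1: "?u ! i = us ! (i - 1)" using sec_us_nth[of i n C i xs us] iS by simp
      have a2: "?u ! (i - 1) = Id C (xs ! (i - 1))" using sec_us_nth[of "i - 1" n C i xs us] k' 2 by simp
      have uu: "us ! (i-1) \<in> Arr C \<and> Dom C (us ! (i - 1)) = xs ! (i - 1)" using u[of "i-1"] k' 2 by simp
      have "Comp C (us ! (i - 1)) (Id C (Dom C (us ! (i - 1)))) = us ! (i - 1)"
        using catD(4)[OF C conjunct1[OF uu]] .
      moreover have "Dom C (us ! (i - 1)) = xs ! (i - 1)" using u[of "i - 1"] k' 2 by simp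
      ultimately show ?thesis using e a1 a2 2 by simp
    next
      case 3
      have "?u ! Suc k = us ! k" using sec_us_nth[of "Suc k" n C i xs us] k' 3 by auto
      thus ?thesis using e 3 by auto
    qed
  qed
  have "face_obj C i (sec_list i n xs, sec_us C i n xs us) = (xs, us)"
    using f1 f2 by (simp add: face_fst prod_eq_iff)
  thus ?thesis using se Xe by simp
qed


lemma E_arr_dest:
  assumes "(X, Y, fs) \<in> E_arr C n"
  shows "X \<in> E_obj C n" "Y \<in> E_obj C n" "length fs = Suc n"
    "\<And>j. j \<le> n \<Longrightarrow> fs ! j \<in> Arr C \<and> Dom C (fs ! j) = fst X ! j \<and> Cod C (fs ! j) = fst Y ! j"
    "\<And>j. j < n \<Longrightarrow> Comp C (snd Y ! j) (fs ! j) = Comp C (fs ! Suc j) (snd X ! j)"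
proof -
  have H: "X \<in> E_obj C n \<and> Y \<in> E_obj C n \<and> length fs = Suc n \<and>
      (\<forall>j\<le>n. fs ! j \<in> Arr C \<and> Dom C (fs ! j) = fst X ! j \<and> Cod C (fs ! j) = fst Y ! j) \<and>
      (\<forall>j<n. Comp C (snd Y ! j) (fs ! j) = Comp C (fs ! Suc j) (snd X ! j))"
    using assms[unfolded E_arr_iff] .
  show "X \<in> E_obj C n" using H by (rule conjunct1)
  show "Y \<in> E_obj C n" using H by (metis conjunct1 conjunct2)
  show "length fs = Suc n" using H by (metis conjunct1 conjunct2)
  show "\<And>j. j \<le> n \<Longrightarrow> fs ! j \<in> Arr C \<and> Dom C (fs ! j) = fst X ! j \<and> Cod C (fs ! j) = fst Y ! j"
    using H by blast
  show "\<And>j. j < n \<Longrightarrow> Comp C (snd Y ! j) (fs ! j) = Comp C (fs ! Suc j) (snd X ! j)"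
    using H by blast
qed

lemma E_obj_dest:
  assumes "(xs, us) \<in> E_obj C n"
  shows "length xs = Suc n" "length us = n" "set xs \<subseteq> Obj C"
    "\<And>j. j < n \<Longrightarrow> us ! j \<in> Arr C \<and> Dom C (us ! j) = xs ! j \<and> Cod C (us ! j) = xs ! Suc j"
proof -
  have H: "length xs = Suc n \<and> length us = n \<and> set xs \<subseteq> Obj C \<and>
      (\<forall>j<n. us ! j \<in> Arr C \<and> Dom C (us ! j) = xs ! j \<and> Cod C (us ! j) = xs ! Suc j)"
    using assms[unfolded E_obj_iff] .
  show "length xs = Suc n" using H by (rule conjunct1)
  show "length us = n" using H by (metis conjunct1 conjunct2)
  show "set xs \<subseteq> Obj C" using H by (metis conjunct1 conjunct2)
  show "\<And>j. j < n \<Longrightarrow> us ! j \<in> Arr C \<and> Dom C (us ! j) = xs ! j \<and> Cod C (us ! j) = xs ! Suc j"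
    using H by blast
qed

lemma sec_arr_mem:
  assumes C: "is_category C" and a: "(X, Y, fs) \<in> E_arr C n" and i: "i \<le> Suc n"
  shows "sec_arr C i n (X, Y, fs) \<in> E_arr C (Suc n)"
proof -
  define xs where "xs = fst X"
  define us where "us = snd X"
  define ys where "ys = fst Y"
  define vs where "vs = snd Y"
  have Xe: "X = (xs, us)" unfolding xs_def us_def by simp
  have Ye: "Y = (ys, vs)" unfolding ys_def vs_def by simp
  note AD = E_arr_dest[OF a]
  have XO: "(xs, us) \<in> E_obj C n" using AD(1) Xe by simp
  have YO: "(ys, vs) \<in> E_obj C n" using AD(2) Ye by simp
  note XD = E_obj_dest[OF XO]
  note YD = E_obj_dest[OF YO]
  have f: "\<And>j. j \<le> n \<Longrightarrow> fs ! j \<in> Arr C \<and> Dom C (fs ! j) = xs ! j \<and> Cod C (fs ! j) = ys ! j"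
    using AD(4) unfolding xs_def ys_def by blast
  have sq: "\<And>j. j < n \<Longrightarrow> Comp C (vs ! j) (fs ! j) = Comp C (fs ! Suc j) (us ! j)"
    using AD(5) unfolding us_def vs_def by blast
  have se: "sec_arr C i n (X, Y, fs) = ((sec_list i n xs, sec_us C i n xs us), (sec_list i n ys, sec_us C i n ys vs), sec_list i n fs)"
    unfolding sec_arr_def sec_obj_def xs_def us_def ys_def vs_def by simp
  have sX: "(sec_list i n xs, sec_us C i n xs us) \<in> E_obj C (Suc n)"
    using sec_obj_mem[OF C AD(1) i] unfolding sec_obj_def xs_def us_def .
  have sY: "(sec_list i n ys, sec_us C i n ys vs) \<in> E_obj C (Suc n)"
    using sec_obj_mem[OF C AD(2) i] unfolding sec_obj_def ys_def vs_def .
  have P1: "sec_list i n fs ! j \<in> Arr C \<and> Dom C (sec_list i n fs ! j) = sec_list i n xs ! j \<and>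
     Cod C (sec_list i n fs ! j) = sec_list i n ys ! j" if j: "j \<le> Suc n" for j
  proof -
    have j': "j < Suc (Suc n)" using j by simp
    have "sidx i j \<le> n" using j i unfolding sidx_def by auto
    thus ?thesis using f[of "sidx i j"] by (simp add: sec_list_nth[OF j'])
  qed
  have P2: "Comp C (sec_us C i n ys vs ! j) (sec_list i n fs ! j) = Comp C (sec_list i n fs ! Suc j) (sec_us C i n xs us ! j)"
    if j: "j < Suc n" for j
  proof -
    have e1: "sec_list i n fs ! j = fs ! sidx i j" by (rule sec_list_nth) (use j in simp)
    have e2: "sec_list i n fs ! Suc j = fs ! sidx i (Suc j)" by (rule sec_list_nth) (use j in simp)
    have eu: "sec_us C i n xs us ! j =
      (if j < i - 1 then us ! j else if j = i - 1 then Id C (xs ! (i - 1)) else us ! (j - 1))"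
      using sec_us_nth[OF j] .
    have ev: "sec_us C i n ys vs ! j =
      (if j < i - 1 then vs ! j else if j = i - 1 then Id C (ys ! (i - 1)) else vs ! (j - 1))"
      using sec_us_nth[OF j] .
    consider "j < i - 1" | "j = i - 1" | "j > i - 1" by linarith
    thus ?thesis
    proof cases
      case 1
      have "j < n" "sidx i j = j" "sidx i (Suc j) = Suc j" using 1 i unfolding sidx_def by auto
      thus ?thesis using e1 e2 eu ev 1 sq[of j] by simp
    next
      case 2
      have s: "sidx i j = i - 1" "sidx i (Suc j) = i - 1" "i - 1 \<le> n" using 2 i unfolding sidx_def by auto
      have ff: "fs ! (i - 1) \<in> Arr C" "Dom C (fs ! (i - 1)) = xs ! (i - 1)" "Cod C (fs ! (i - 1)) = ys ! (i - 1)"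
        using f[OF s(3)] by auto
      have "Comp C (Id C (ys ! (i - 1))) (fs ! (i - 1)) = fs ! (i - 1)"
        using catD(5)[OF C ff(1)] ff(3) by simp
      moreover have "Comp C (fs ! (i - 1)) (Id C (xs ! (i - 1))) = fs ! (i - 1)"
        using catD(4)[OF C ff(1)] ff(2) by simp
      ultimately show ?thesis using e1 e2 eu ev 2 s by simp
    next
      case 3
      have s: "sidx i j = j - 1" "sidx i (Suc j) = j" "j - 1 < n" "Suc (j - 1) = j" using 3 j unfolding sidx_def by auto
      have "Comp C (vs ! (j - 1)) (fs ! (j - 1)) = Comp C (fs ! Suc (j - 1)) (us ! (j - 1))" by (rule sq[OF s(3)])
      thus ?thesis using e1 e2 eu ev 3 s by simp
    qed
  qed
  have "((sec_list i n xs, sec_us C i n xs us), (sec_list i n ys, sec_us C i n ys vs), sec_list i n fs) \<in> E_arr C (Suc n)"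
    unfolding E_arr_iff fst_conv snd_conv using sX sY sec_list_length[of i n fs] P1 P2 by blast
  thus ?thesis unfolding se .
qed

lemma face_sec_arr:
  assumes C: "is_category C" and a: "(X, Y, fs) \<in> E_arr C n" and i: "i \<le> Suc n"
  shows "face_arr C i (sec_arr C i n (X, Y, fs)) = (X, Y, fs)"
proof -
  note AD = E_arr_dest[OF a]
  have il: "i < length (sec_list i n fs)" unfolding sec_list_length using i by simp
  have "del_nth i (sec_list i n fs) = fs"
  proof (rule nth_equalityI)
    show "length (del_nth i (sec_list i n fs)) = length fs" using del_nth_length[OF il] AD(3) by (simp add: sec_list_length)
    fix k assume k: "k < length (del_nth i (sec_list i n fs))"
    hence k': "k < length (sec_list i n fs) - 1" using del_nth_length[OF il] by simp
    have "del_nth i (sec_list i n fs) ! k = sec_list i n fs ! (if k < i then k else Suc k)"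
      by (rule del_nth_nth[OF il k'])
    also have "\<dots> = fs ! sidx i (if k < i then k else Suc k)" using k' by (simp add: sec_list_length sec_list_nth)
    also have "sidx i (if k < i then k else Suc k) = k" unfolding sidx_def by auto
    finally show "del_nth i (sec_list i n fs) ! k = fs ! k" .
  qed
  moreover have "face_obj C i (sec_obj C i n X) = X" by (rule face_sec_obj[OF C AD(1) i])
  moreover have "face_obj C i (sec_obj C i n Y) = Y" by (rule face_sec_obj[OF C AD(2) i])
  ultimately show ?thesis unfolding sec_arr_def face_arr_def by simp
qed

lemma sec_comp:
  assumes a: "(X, Y, fs) \<in> E_arr C n" and b: "(Y, Z, gs) \<in> E_arr C n" and i: "i \<le> Suc n"
  shows "sec_arr C i n (Comp (E_cat C n) (Y, Z, gs) (X, Y, fs)) =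
         Comp (E_cat C (Suc n)) (sec_arr C i n (Y, Z, gs)) (sec_arr C i n (X, Y, fs))"
proof -
  have lf: "length fs = Suc n" by (rule E_arr_dest(3)[OF a])
  have lg: "length gs = Suc n" by (rule E_arr_dest(3)[OF b])
  have "sec_list i n (map2 (Comp C) gs fs) = map2 (Comp C) (sec_list i n gs) (sec_list i n fs)"
  proof (rule nth_equalityI)
    show "length (sec_list i n (map2 (Comp C) gs fs)) = length (map2 (Comp C) (sec_list i n gs) (sec_list i n fs))"
      by (simp add: sec_list_length)
    fix k assume k: "k < length (sec_list i n (map2 (Comp C) gs fs))"
    hence k': "k < Suc (Suc n)" by (simp add: sec_list_length)
    have "sidx i k < Suc n" using k' i unfolding sidx_def by auto
    thus "sec_list i n (map2 (Comp C) gs fs) ! k = map2 (Comp C) (sec_list i n gs) (sec_list i n fs) ! k"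
      using k' lf lg by (simp add: sec_list_length sec_list_nth)
  qed
  thus ?thesis unfolding sec_arr_def by (simp add: E_cat_simps)
qed



lemma SF_nth:
  assumes C: "is_category C" and X: "(xs, us) \<in> E_obj C (Suc n)" and i: "i \<le> Suc n"
  shows "\<And>j. j < Suc (Suc n) \<Longrightarrow> fst (sec_obj C i n (face_obj C i (xs, us))) ! j =
           xs ! (if j = i then (if i = 0 then 1 else i - 1) else j)"
    and "\<And>j. j < Suc n \<Longrightarrow> snd (sec_obj C i n (face_obj C i (xs, us))) ! j =
           (if i = 0 then (if j = 0 then Id C (xs ! 1) else us ! j)
            else if j < i - 1 then us ! j else if j = i - 1 then Id C (xs ! (i - 1))
            else if j = i then Comp C (us ! i) (us ! (i - 1)) else us ! j)"
proof -
  note XD = E_obj_dest[OF X]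
  have ilx: "i < length xs" using i XD(1) by simp
  have fe: "fst (sec_obj C i n (face_obj C i (xs, us))) = sec_list i n (del_nth i xs)"
    unfolding sec_obj_def by (simp add: face_fst)
  have se: "snd (sec_obj C i n (face_obj C i (xs, us))) = sec_us C i n (del_nth i xs) (snd (face_obj C i (xs, us)))"
    unfolding sec_obj_def by (simp add: face_fst)
  have dn: "del_nth i xs ! k = xs ! (if k < i then k else Suc k)" if "k \<le> n" for k
  proof -
    have "k < length xs - 1" using that XD(1) by simp
    thus ?thesis by (rule del_nth_nth[OF ilx])
  qed
  have fn: "snd (face_obj C i (xs, us)) ! k = (if i \<noteq> 0 \<and> k < i - 1 then us ! k
     else if i \<noteq> 0 \<and> k = i - 1 then Comp C (us ! i) (us ! (i - 1)) else us ! Suc k)" if "k < n" for k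
    by (rule face_us_nth[OF XD(2) i that])
  show "fst (sec_obj C i n (face_obj C i (xs, us))) ! j = xs ! (if j = i then (if i = 0 then 1 else i - 1) else j)"
    if j: "j < Suc (Suc n)" for j
  proof -
    have "fst (sec_obj C i n (face_obj C i (xs, us))) ! j = del_nth i xs ! sidx i j"
      unfolding fe by (rule sec_list_nth[OF j])
    also have "\<dots> = xs ! (if sidx i j < i then sidx i j else Suc (sidx i j))"
      by (rule dn) (use j i in \<open>auto simp: sidx_def\<close>)
    also have "(if sidx i j < i then sidx i j else Suc (sidx i j)) = (if j = i then (if i = 0 then 1 else i - 1) else j)"
      unfolding sidx_def using j by auto
    finally show ?thesis .
  qed
  show "snd (sec_obj C i n (face_obj C i (xs, us))) ! j =
           (if i = 0 then (if j = 0 then Id C (xs ! 1) else us ! j)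
            else if j < i - 1 then us ! j else if j = i - 1 then Id C (xs ! (i - 1))
            else if j = i then Comp C (us ! i) (us ! (i - 1)) else us ! j)"
    if j: "j < Suc n" for j
  proof -
    have e: "snd (sec_obj C i n (face_obj C i (xs, us))) ! j =
      (if j < i - 1 then snd (face_obj C i (xs, us)) ! j else if j = i - 1 then Id C (del_nth i xs ! (i - 1))
       else snd (face_obj C i (xs, us)) ! (j - 1))"
      unfolding se by (rule sec_us_nth[OF j])
    have d: "del_nth i xs ! (i - 1) = xs ! (if i = 0 then 1 else i - 1)"
      using dn[of "i - 1"] i by auto
    consider "j < i - 1" | "j = i - 1" | "j > i - 1" by linarith
    thus ?thesis
    proof cases
      case 1
      hence "j < n" "i \<noteq> 0" using i by auto
      thus ?thesis using e fn[of j] 1 by simp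
    next
      case 2
      thus ?thesis using e d by auto
    next
      case 3
      have jn: "j - 1 < n" using 3 j by auto
      show ?thesis
      proof (cases "i = 0")
        case True
        thus ?thesis using e fn[OF jn] 3 by auto
      next
        case False
        thus ?thesis using e fn[OF jn] 3 by auto
      qed
    qed
  qed
qed


definition unit_list :: "('o, 'm) cat \<Rightarrow> nat \<Rightarrow> nat \<Rightarrow> 'o list \<Rightarrow> 'm list \<Rightarrow> 'm list" where
  "unit_list C i n xs us = map (\<lambda>j. if j = i then us ! (if i = 0 then 0 else i - 1) else Id C (xs ! j)) [0..<Suc (Suc n)]"

lemma unit_list_nth: "j < Suc (Suc n) \<Longrightarrow> unit_list C i n xs us ! j =
   (if j = i then us ! (if i = 0 then 0 else i - 1) else Id C (xs ! j))"
  unfolding unit_list_def by (simp del: upt_Suc)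

lemma unit_list_length: "length (unit_list C i n xs us) = Suc (Suc n)"
  unfolding unit_list_def by simp

lemma E_unit:
  assumes C: "is_category C" and X: "(xs, us) \<in> E_obj C (Suc n)" and i: "i \<le> Suc n"
  defines "Z \<equiv> sec_obj C i n (face_obj C i (xs, us))"
  shows "(if i = 0 then ((xs, us), Z, unit_list C i n xs us) else (Z, (xs, us), unit_list C i n xs us)) \<in> E_arr C (Suc n)"
    and "face_arr C i (if i = 0 then ((xs, us), Z, unit_list C i n xs us) else (Z, (xs, us), unit_list C i n xs us))
         = Id (E_cat C n) (face_obj C i (xs, us))"
proof -
  note XD = E_obj_dest[OF X]
  have xo: "xs ! k \<in> Obj C" if "k \<le> Suc n" for k
  proof -
    have "xs ! k \<in> set xs" using that XD(1) by simp
    thus ?thesis using XD(3) by (rule subsetD[rotated])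
  qed
  have idk: "Id C (xs ! k) \<in> Arr C \<and> Dom C (Id C (xs ! k)) = xs ! k \<and> Cod C (Id C (xs ! k)) = xs ! k"
    if "k \<le> Suc n" for k using catD(2)[OF C xo[OF that]] .
  have FX: "face_obj C i (xs, us) \<in> E_obj C n" by (rule face_obj_mem[OF C X i])
  have ZO: "Z \<in> E_obj C (Suc n)" unfolding Z_def by (rule sec_obj_mem[OF C FX i])
  have FZ: "face_obj C i Z = face_obj C i (xs, us)" unfolding Z_def by (rule face_sec_obj[OF C FX i])
  note Zf = SF_nth(1)[OF C X i, folded Z_def]
  note Zs = SF_nth(2)[OF C X i, folded Z_def]
  let ?f = "unit_list C i n xs us"
  have fn: "\<And>j. j < Suc (Suc n) \<Longrightarrow> ?f ! j = (if j = i then us ! (if i = 0 then 0 else i - 1) else Id C (xs ! j))"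
    by (rule unit_list_nth)
  have lf: "length ?f = Suc (Suc n)" by (rule unit_list_length)
  have idl: "\<And>g. g \<in> Arr C \<Longrightarrow> Comp C (Id C (Cod C g)) g = g" by (rule catD(5)[OF C])
  have idr: "\<And>g. g \<in> Arr C \<Longrightarrow> Comp C g (Id C (Dom C g)) = g" by (rule catD(4)[OF C])
  show "(if i = 0 then ((xs, us), Z, ?f) else (Z, (xs, us), ?f)) \<in> E_arr C (Suc n)"
  proof (cases "i = 0")
    case True
    have P1: "?f ! j \<in> Arr C \<and> Dom C (?f ! j) = xs ! j \<and> Cod C (?f ! j) = fst Z ! j" if j: "j \<le> Suc n" for j
    proof (cases "j = 0")
      case True
      thus ?thesis using fn[of 0] Zf[of 0] XD(4)[of 0] \<open>i = 0\<close> by simp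
    next
      case False
      thus ?thesis using fn[of j] Zf[of j] idk[OF j] \<open>i = 0\<close> j by simp
    qed
    have P2: "Comp C (snd Z ! j) (?f ! j) = Comp C (?f ! Suc j) (us ! j)" if j: "j < Suc n" for j
    proof (cases "j = 0")
      case True
      thus ?thesis using fn[of 0] fn[of 1] Zs[of 0] \<open>i = 0\<close> by simp
    next
      case False
      have u: "us ! j \<in> Arr C" "Dom C (us ! j) = xs ! j" "Cod C (us ! j) = xs ! Suc j" using XD(4)[OF j] by auto
      have "Comp C (us ! j) (Id C (xs ! j)) = us ! j" using idr[OF u(1)] u(2) by simp
      moreover have "Comp C (Id C (xs ! Suc j)) (us ! j) = us ! j" using idl[OF u(1)] u(3) by simp
      ultimately show ?thesis using fn[of j] fn[of "Suc j"] Zs[of j] \<open>i = 0\<close> j False by simp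
    qed
    have "((xs, us), Z, ?f) \<in> E_arr C (Suc n)"
      unfolding E_arr_iff fst_conv snd_conv using X ZO lf P1 P2 by blast
    thus ?thesis using True by simp
  next
    case False
    have P1: "?f ! j \<in> Arr C \<and> Dom C (?f ! j) = fst Z ! j \<and> Cod C (?f ! j) = xs ! j" if j: "j \<le> Suc n" for j
    proof (cases "j = i")
      case True
      have "i - 1 < Suc n" using i False by auto
      thus ?thesis using fn[of j] Zf[of j] XD(4)[of "i - 1"] True False j by simp
    next
      case F2: False
      thus ?thesis using fn[of j] Zf[of j] idk[OF j] j by simp
    qed
    have P2: "Comp C (us ! j) (?f ! j) = Comp C (?f ! Suc j) (snd Z ! j)" if j: "j < Suc n" for j
    proof -
      consider "j < i - 1" | "j = i - 1" | "j = i" | "j > i" by linarith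
      thus ?thesis
      proof cases
        case 1
        have u: "us ! j \<in> Arr C" "Dom C (us ! j) = xs ! j" "Cod C (us ! j) = xs ! Suc j" using XD(4)[OF j] by auto
        have "Comp C (us ! j) (Id C (xs ! j)) = us ! j" using idr[OF u(1)] u(2) by simp
        moreover have "Comp C (Id C (xs ! Suc j)) (us ! j) = us ! j" using idl[OF u(1)] u(3) by simp
        moreover have "j \<noteq> i" "Suc j \<noteq> i" using 1 by auto
        ultimately show ?thesis using fn[of j] fn[of "Suc j"] Zs[OF j] False j 1 by simp
      next
        case 2
        have u: "us ! j \<in> Arr C" "Dom C (us ! j) = xs ! j" "Cod C (us ! j) = xs ! Suc j" using XD(4)[OF j] by auto
        have "Comp C (us ! j) (Id C (xs ! j)) = us ! j" using idr[OF u(1)] u(2) by simp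
        moreover have "Suc j = i" "j \<noteq> i" "i - 1 \<noteq> i" using 2 False by auto
        ultimately show ?thesis using fn[of j] fn[of "Suc j"] Zs[OF j] False j 2 by simp
      next
        case 3
        have u: "us ! i \<in> Arr C" "Dom C (us ! i) = xs ! i" "Cod C (us ! i) = xs ! Suc i" using XD(4) j 3 by auto
        have u1: "us ! (i-1) \<in> Arr C" "Dom C (us ! (i-1)) = xs ! (i-1)" "Cod C (us ! (i-1)) = xs ! i"
          using XD(4)[of "i - 1"] j 3 False by auto
        have cc: "Comp C (us ! i) (us ! (i - 1)) \<in> Arr C \<and> Cod C (Comp C (us ! i) (us ! (i - 1))) = xs ! Suc i"
          using catD(3)[OF C u1(1) u(1)] u u1 by simp
        have "Comp C (Id C (xs ! Suc i)) (Comp C (us ! i) (us ! (i - 1))) = Comp C (us ! i) (us ! (i - 1))"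
          using idl[OF conjunct1[OF cc]] cc by simp
        moreover have "\<not> i < i - 1" "i \<noteq> i - 1" "Suc i \<noteq> i" using False by auto
        ultimately show ?thesis using fn[of j] fn[of "Suc j"] Zs[OF j] False j 3 by simp
      next
        case 4
        have u: "us ! j \<in> Arr C" "Dom C (us ! j) = xs ! j" "Cod C (us ! j) = xs ! Suc j" using XD(4)[OF j] by auto
        have "Comp C (us ! j) (Id C (xs ! j)) = us ! j" using idr[OF u(1)] u(2) by simp
        moreover have "Comp C (Id C (xs ! Suc j)) (us ! j) = us ! j" using idl[OF u(1)] u(3) by simp
        moreover have "\<not> j < i - 1" "j \<noteq> i - 1" "j \<noteq> i" "Suc j \<noteq> i" using 4 by auto
        ultimately show ?thesis using fn[of j] fn[of "Suc j"] Zs[OF j] False j 4 by simp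
      qed
    qed
    have "(Z, (xs, us), ?f) \<in> E_arr C (Suc n)"
      unfolding E_arr_iff fst_conv snd_conv using X ZO lf P1 P2 by blast
    thus ?thesis using False by simp
  qed
  have il: "i < length ?f" using lf i by simp
  have ilx: "i < length xs" using XD(1) i by simp
  have dl: "del_nth i ?f = map (Id C) (del_nth i xs)"
  proof (rule nth_equalityI)
    show "length (del_nth i ?f) = length (map (Id C) (del_nth i xs))"
      using del_nth_length[OF il] del_nth_length[OF ilx] lf XD(1) by simp
    fix k assume k: "k < length (del_nth i ?f)"
    hence k': "k < length ?f - 1" "k < length xs - 1" using del_nth_length[OF il] lf XD(1) by auto
    have "del_nth i ?f ! k = ?f ! (if k < i then k else Suc k)" by (rule del_nth_nth[OF il k'(1)])
    also have "\<dots> = Id C (xs ! (if k < i then k else Suc k))" using fn k' lf by auto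
    also have "\<dots> = Id C (del_nth i xs ! k)" using del_nth_nth[OF ilx k'(2)] by simp
    finally show "del_nth i ?f ! k = map (Id C) (del_nth i xs) ! k"
      using k' del_nth_length[OF ilx] by simp
  qed
  show "face_arr C i (if i = 0 then ((xs, us), Z, ?f) else (Z, (xs, us), ?f)) = Id (E_cat C n) (face_obj C i (xs, us))"
  proof -
    have R: "Id (E_cat C n) (face_obj C i (xs, us)) = (face_obj C i (xs, us), face_obj C i (xs, us), del_nth i ?f)"
      unfolding E_cat_simps dl by (simp add: face_fst)
    have A1: "face_arr C i ((xs, us), Z, ?f) = (face_obj C i (xs, us), face_obj C i (xs, us), del_nth i ?f)"
      unfolding face_arr_def using FZ by simp
    have A2: "face_arr C i (Z, (xs, us), ?f) = (face_obj C i (xs, us), face_obj C i (xs, us), del_nth i ?f)"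
      unfolding face_arr_def using FZ by simp
    show ?thesis
    proof (cases "i = 0")
      case True show ?thesis unfolding if_P[OF True] R by (rule A1)
    next
      case False show ?thesis unfolding if_not_P[OF False] R by (rule A2)
    qed
  qed
qed



lemma E_id_ok:
  assumes C: "is_category C"
  shows "\<forall>x\<in>Obj (E_cat C n). Id (E_cat C n) x \<in> Arr (E_cat C n) \<and> Dom (E_cat C n) (Id (E_cat C n) x) = x
           \<and> Cod (E_cat C n) (Id (E_cat C n) x) = x"
proof
  fix X assume X0: "X \<in> Obj (E_cat C n)"
  define xs where "xs = fst X"
  define us where "us = snd X"
  have Xe: "X = (xs, us)" unfolding xs_def us_def by simp
  have X: "(xs, us) \<in> E_obj C n" using X0 unfolding Xe E_cat_simps .
  note XD = E_obj_dest[OF X]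
  have xo: "xs ! k \<in> Obj C" if "k \<le> n" for k
  proof -
    have "xs ! k \<in> set xs" using that XD(1) by simp
    thus ?thesis using XD(3) by (rule subsetD[rotated])
  qed
  have P1: "map (Id C) xs ! j \<in> Arr C \<and> Dom C (map (Id C) xs ! j) = xs ! j \<and> Cod C (map (Id C) xs ! j) = xs ! j"
    if j: "j \<le> n" for j
    using catD(2)[OF C xo[OF j]] j XD(1) by simp
  have P2: "Comp C (us ! j) (map (Id C) xs ! j) = Comp C (map (Id C) xs ! Suc j) (us ! j)" if j: "j < n" for j
  proof -
    have u: "us ! j \<in> Arr C" "Dom C (us ! j) = xs ! j" "Cod C (us ! j) = xs ! Suc j" using XD(4)[OF j] by auto
    have "Comp C (us ! j) (Id C (xs ! j)) = us ! j" using catD(4)[OF C u(1)] u(2) by simp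
    moreover have "Comp C (Id C (xs ! Suc j)) (us ! j) = us ! j" using catD(5)[OF C u(1)] u(3) by simp
    ultimately show ?thesis using j XD(1) by simp
  qed
  have "((xs, us), (xs, us), map (Id C) xs) \<in> E_arr C n"
    unfolding E_arr_iff fst_conv snd_conv using X XD(1) P1 P2 by simp
  thus "Id (E_cat C n) X \<in> Arr (E_cat C n) \<and> Dom (E_cat C n) (Id (E_cat C n) X) = X
           \<and> Cod (E_cat C n) (Id (E_cat C n) X) = X" unfolding Xe E_cat_simps by simp
qed

theorem E_part:
  fixes M :: "(('o, 'm) ladder, ('o, 'm) string_obj, 'k::field) module"
  assumes C: "is_category C" and M: "indecomposable (E_cat C n) M" and i: "i \<le> Suc n"
  shows "indecomposable (E_cat C (Suc n)) (pullback (face_obj C i) (face_arr C i) M)"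
proof (rule abstract_main[OF E_id_ok[OF C] M E_face_functor[OF C i] E_BO, where So = "sec_obj C i n" and Sm = "sec_arr C i n"])
  show "\<forall>x\<in>Obj (E_cat C n). sec_obj C i n x \<in> Obj (E_cat C (Suc n)) \<and> face_obj C i (sec_obj C i n x) = x"
    unfolding E_cat_simps using sec_obj_mem[OF C _ i] face_sec_obj[OF C _ i] by blast
  show "\<forall>f\<in>Arr (E_cat C n). sec_arr C i n f \<in> Arr (E_cat C (Suc n)) \<and>
     Dom (E_cat C (Suc n)) (sec_arr C i n f) = sec_obj C i n (Dom (E_cat C n) f) \<and>
     Cod (E_cat C (Suc n)) (sec_arr C i n f) = sec_obj C i n (Cod (E_cat C n) f) \<and> face_arr C i (sec_arr C i n f) = f"
  proof
    fix f assume f0: "f \<in> Arr (E_cat C n)"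
    define X where "X = fst f"
    define Y where "Y = fst (snd f)"
    define fs where "fs = snd (snd f)"
    have fe: "f = (X, Y, fs)" unfolding X_def Y_def fs_def by simp
    have f: "(X, Y, fs) \<in> E_arr C n" using f0 unfolding fe E_cat_simps .
    have se: "sec_arr C i n (X, Y, fs) = (sec_obj C i n X, sec_obj C i n Y, sec_list i n fs)"
      unfolding sec_arr_def by simp
    show "sec_arr C i n f \<in> Arr (E_cat C (Suc n)) \<and>
     Dom (E_cat C (Suc n)) (sec_arr C i n f) = sec_obj C i n (Dom (E_cat C n) f) \<and>
     Cod (E_cat C (Suc n)) (sec_arr C i n f) = sec_obj C i n (Cod (E_cat C n) f) \<and> face_arr C i (sec_arr C i n f) = f"
      unfolding fe using sec_arr_mem[OF C f i] face_sec_arr[OF C f i] se by (simp add: E_cat_simps)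
  qed
  show "\<forall>f\<in>Arr (E_cat C n). \<forall>g\<in>Arr (E_cat C n). Cod (E_cat C n) f = Dom (E_cat C n) g \<longrightarrow>
     sec_arr C i n (Comp (E_cat C n) g f) = Comp (E_cat C (Suc n)) (sec_arr C i n g) (sec_arr C i n f)"
  proof (intro ballI impI)
    fix f g assume f0: "f \<in> Arr (E_cat C n)" and g0: "g \<in> Arr (E_cat C n)"
      and fg: "Cod (E_cat C n) f = Dom (E_cat C n) g"
    define X where "X = fst f"
    define Y where "Y = fst (snd f)"
    define fs where "fs = snd (snd f)"
    have fe: "f = (X, Y, fs)" unfolding X_def Y_def fs_def by simp
    define Y' where "Y' = fst g"
    define Z where "Z = fst (snd g)"
    define gs where "gs = snd (snd g)"
    have ge: "g = (Y', Z, gs)" unfolding Y'_def Z_def gs_def by simp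
    have YY: "Y' = Y" using fg unfolding fe ge E_cat_simps by simp
    have f: "(X, Y, fs) \<in> E_arr C n" using f0 unfolding fe E_cat_simps .
    have g: "(Y, Z, gs) \<in> E_arr C n" using g0 unfolding ge YY E_cat_simps .
    show "sec_arr C i n (Comp (E_cat C n) g f) = Comp (E_cat C (Suc n)) (sec_arr C i n g) (sec_arr C i n f)"
      unfolding fe ge YY by (rule sec_comp[OF f g i])
  qed
  show "\<forall>X\<in>Obj (E_cat C (Suc n)). \<exists>a\<in>Arr (E_cat C (Suc n)).
      (Dom (E_cat C (Suc n)) a = X \<and> Cod (E_cat C (Suc n)) a = sec_obj C i n (face_obj C i X) \<or>
       Dom (E_cat C (Suc n)) a = sec_obj C i n (face_obj C i X) \<and> Cod (E_cat C (Suc n)) a = X) \<and>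
      face_arr C i a = Id (E_cat C n) (face_obj C i X)"
  proof
    fix X assume X0: "X \<in> Obj (E_cat C (Suc n))"
    define xs where "xs = fst X"
    define us where "us = snd X"
    have Xe: "X = (xs, us)" unfolding xs_def us_def by simp
    have X: "(xs, us) \<in> E_obj C (Suc n)" using X0 unfolding Xe E_cat_simps .
    define Z where "Z = sec_obj C i n (face_obj C i (xs, us))"
    define a where "a = (if i = 0 then ((xs, us), Z, unit_list C i n xs us) else (Z, (xs, us), unit_list C i n xs us))"
    have a1: "a \<in> E_arr C (Suc n)" unfolding a_def Z_def by (rule E_unit(1)[OF C X i])
    have a2: "face_arr C i a = Id (E_cat C n) (face_obj C i (xs, us))" unfolding a_def Z_def by (rule E_unit(2)[OF C X i])
    have a3: "(Dom (E_cat C (Suc n)) a = (xs, us) \<and> Cod (E_cat C (Suc n)) a = Z \<or>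
       Dom (E_cat C (Suc n)) a = Z \<and> Cod (E_cat C (Suc n)) a = (xs, us))"
      unfolding a_def by (simp add: E_cat_simps)
    show "\<exists>a\<in>Arr (E_cat C (Suc n)).
      (Dom (E_cat C (Suc n)) a = X \<and> Cod (E_cat C (Suc n)) a = sec_obj C i n (face_obj C i X) \<or>
       Dom (E_cat C (Suc n)) a = sec_obj C i n (face_obj C i X) \<and> Cod (E_cat C (Suc n)) a = X) \<and>
      face_arr C i a = Id (E_cat C n) (face_obj C i X)"
      unfolding Xe E_cat_simps(2) using a1 a2 a3 unfolding Z_def by blast
  qed
qed



lemma G1_simps:
  "Obj (G1_cat C) = Arr C" "Arr (G1_cat C) = G1_arr C"
  "Dom (G1_cat C) (u, v, h) = u" "Cod (G1_cat C) (u, v, h) = v"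
  "Id (G1_cat C) u = (u, u, None)" "Comp (G1_cat C) = G1_comp C"
  unfolding G1_cat_def by simp_all

lemma G1_arr_cases:
  assumes "a \<in> G1_arr C"
  obtains (idc) u where "u \<in> Arr C" "a = (u, u, None)"
    | (pair) u v w where "u \<in> Arr C" "v \<in> Arr C" "w \<in> Arr C" "Dom C w = Cod C u" "Cod C w = Dom C v"
        "a = (u, v, Some (Comp C w u, Comp C v w))"
  using assms unfolding G1_arr_def by blast

lemma G1_comp_simps:
  "G1_comp C (v, v', h) (u, u, None) = (u, v', h)"
  "G1_comp C (v, v, None) (u, v, Some pq) = (u, v, Some pq)"
  "G1_comp C (v, v', Some (p', q')) (u, v, Some (p, q)) = (u, v', Some (Comp C p' p, Comp C q' q))"
  unfolding G1_comp_def by simp_all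

lemma G_BO: "\<forall>a\<in>Arr (G1_cat C). Dom (G1_cat C) a \<in> Obj (G1_cat C) \<and> Cod (G1_cat C) a \<in> Obj (G1_cat C)"
proof
  fix a assume "a \<in> Arr (G1_cat C)"
  hence a: "a \<in> G1_arr C" by (simp add: G1_simps)
  show "Dom (G1_cat C) a \<in> Obj (G1_cat C) \<and> Cod (G1_cat C) a \<in> Obj (G1_cat C)"
    using a by (cases rule: G1_arr_cases) (simp_all add: G1_simps)
qed

lemma C_id_ok: assumes C: "is_category C" shows "\<forall>x\<in>Obj C. Id C x \<in> Arr C \<and> Dom C (Id C x) = x \<and> Cod C (Id C x) = x"
proof
  fix x assume "x \<in> Obj C"
  thus "Id C x \<in> Arr C \<and> Dom C (Id C x) = x \<and> Cod C (Id C x) = x" by (rule catD(2)[OF C])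
qed

lemma G_face0_functor:
  assumes C: "is_category C"
  shows "is_functor (G1_cat C) C (Cod C) (G_face0_arr C)"
proof -
  have P1: "\<forall>X\<in>Obj (G1_cat C). Cod C X \<in> Obj C"
  proof
    fix X assume "X \<in> Obj (G1_cat C)"
    thus "Cod C X \<in> Obj C" using catD(1)[OF C] by (simp add: G1_simps)
  qed
  have P2: "\<forall>a\<in>Arr (G1_cat C). G_face0_arr C a \<in> Arr C \<and> Dom C (G_face0_arr C a) = Cod C (Dom (G1_cat C) a) \<and>
        Cod C (G_face0_arr C a) = Cod C (Cod (G1_cat C) a)"
  proof
  fix a assume "a \<in> Arr (G1_cat C)"
  hence a: "a \<in> G1_arr C" by (simp add: G1_simps)
  thus "G_face0_arr C a \<in> Arr C \<and> Dom C (G_face0_arr C a) = Cod C (Dom (G1_cat C) a) \<and>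
        Cod C (G_face0_arr C a) = Cod C (Cod (G1_cat C) a)"
  proof (cases rule: G1_arr_cases)
    case (idc u)
    thus ?thesis using catD(2)[OF C] catD(1)[OF C] by (simp add: G1_simps G_face0_arr_def)
  next
    case (pair u v w)
    thus ?thesis using catD(3)[OF C, of w v] by (simp add: G1_simps G_face0_arr_def)
  qed
  qed
  have P3: "\<forall>X\<in>Obj (G1_cat C). G_face0_arr C (Id (G1_cat C) X) = Id C (Cod C X)"
    by (simp add: G1_simps G_face0_arr_def)
  have P4: "\<forall>a\<in>Arr (G1_cat C). \<forall>b\<in>Arr (G1_cat C). Cod (G1_cat C) a = Dom (G1_cat C) b \<longrightarrow>
     G_face0_arr C (Comp (G1_cat C) b a) = Comp C (G_face0_arr C b) (G_face0_arr C a)"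
  proof (intro ballI impI)
  fix a b assume a0: "a \<in> Arr (G1_cat C)" and b0: "b \<in> Arr (G1_cat C)" and ab: "Cod (G1_cat C) a = Dom (G1_cat C) b"
  have a: "a \<in> G1_arr C" and b: "b \<in> G1_arr C" using a0 b0 by (simp_all add: G1_simps)
  show "G_face0_arr C (Comp (G1_cat C) b a) = Comp C (G_face0_arr C b) (G_face0_arr C a)"
    using a
  proof (cases rule: G1_arr_cases)
    case (idc u)
    note au = idc
    show ?thesis using b
    proof (cases rule: G1_arr_cases)
      case (idc u')
      have "u' = u" using ab au idc by (simp add: G1_simps)
      thus ?thesis using au idc catD(2)[OF C, of "Cod C u"] catD(1)[OF C, of u] catD(4)[OF C, of "Id C (Cod C u)"]
        by (simp add: G1_simps G_face0_arr_def G1_comp_simps)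
    next
      case (pair u' v' w')
      have "u' = u" using ab au pair by (simp add: G1_simps)
      moreover have "Comp C (Comp C v' w') (Id C (Dom C (Comp C v' w'))) = Comp C v' w'"
        by (rule catD(4)[OF C conjunct1[OF catD(3)[OF C pair(3) pair(2) pair(5)]]])
      moreover have "Dom C (Comp C v' w') = Cod C u" using catD(3)[OF C, of w' v'] pair calculation(1) by simp
      ultimately show ?thesis using au pair by (simp add: G1_simps G_face0_arr_def G1_comp_simps)
    qed
  next
    case (pair u v w)
    note ap = pair
    show ?thesis using b
    proof (cases rule: G1_arr_cases)
      case (idc u')
      have "u' = v" using ab ap idc by (simp add: G1_simps)
      moreover have "Comp C (Id C (Cod C (Comp C v w))) (Comp C v w) = Comp C v w"
        by (rule catD(5)[OF C conjunct1[OF catD(3)[OF C ap(3) ap(2) ap(5)]]])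
      moreover have "Cod C (Comp C v w) = Cod C v" using catD(3)[OF C, of w v] ap by simp
      ultimately show ?thesis using ap idc by (simp add: G1_simps G_face0_arr_def G1_comp_simps)
    next
      case (pair u' v' w')
      have "u' = v" using ab ap pair by (simp add: G1_simps)
      thus ?thesis using ap pair by (simp add: G1_simps G_face0_arr_def G1_comp_simps)
    qed
  qed
  qed
  show ?thesis unfolding is_functor_def by (rule conjI[OF P1 conjI[OF P2 conjI[OF P3 P4]]])
qed

lemma G_face1_functor:
  assumes C: "is_category C"
  shows "is_functor (G1_cat C) C (Dom C) (G_face1_arr C)"
proof -
  have P1: "\<forall>X\<in>Obj (G1_cat C). Dom C X \<in> Obj C"
  proof
    fix X assume "X \<in> Obj (G1_cat C)"
    thus "Dom C X \<in> Obj C" using catD(1)[OF C] by (simp add: G1_simps)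
  qed
  have P2: "\<forall>a\<in>Arr (G1_cat C). G_face1_arr C a \<in> Arr C \<and> Dom C (G_face1_arr C a) = Dom C (Dom (G1_cat C) a) \<and>
        Cod C (G_face1_arr C a) = Dom C (Cod (G1_cat C) a)"
  proof
  fix a assume "a \<in> Arr (G1_cat C)"
  hence a: "a \<in> G1_arr C" by (simp add: G1_simps)
  thus "G_face1_arr C a \<in> Arr C \<and> Dom C (G_face1_arr C a) = Dom C (Dom (G1_cat C) a) \<and>
        Cod C (G_face1_arr C a) = Dom C (Cod (G1_cat C) a)"
  proof (cases rule: G1_arr_cases)
    case (idc u)
    thus ?thesis using catD(2)[OF C] catD(1)[OF C] by (simp add: G1_simps G_face1_arr_def)
  next
    case (pair u v w)
    thus ?thesis using catD(3)[OF C, of u w] by (simp add: G1_simps G_face1_arr_def)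
  qed
  qed
  have P3: "\<forall>X\<in>Obj (G1_cat C). G_face1_arr C (Id (G1_cat C) X) = Id C (Dom C X)"
    by (simp add: G1_simps G_face1_arr_def)
  have P4: "\<forall>a\<in>Arr (G1_cat C). \<forall>b\<in>Arr (G1_cat C). Cod (G1_cat C) a = Dom (G1_cat C) b \<longrightarrow>
     G_face1_arr C (Comp (G1_cat C) b a) = Comp C (G_face1_arr C b) (G_face1_arr C a)"
  proof (intro ballI impI)
  fix a b assume a0: "a \<in> Arr (G1_cat C)" and b0: "b \<in> Arr (G1_cat C)" and ab: "Cod (G1_cat C) a = Dom (G1_cat C) b"
  have a: "a \<in> G1_arr C" and b: "b \<in> G1_arr C" using a0 b0 by (simp_all add: G1_simps)
  show "G_face1_arr C (Comp (G1_cat C) b a) = Comp C (G_face1_arr C b) (G_face1_arr C a)"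
    using a
  proof (cases rule: G1_arr_cases)
    case (idc u)
    note au = idc
    show ?thesis using b
    proof (cases rule: G1_arr_cases)
      case (idc u')
      have "u' = u" using ab au idc by (simp add: G1_simps)
      thus ?thesis using au idc catD(2)[OF C, of "Dom C u"] catD(1)[OF C, of u] catD(4)[OF C, of "Id C (Dom C u)"]
        by (simp add: G1_simps G_face1_arr_def G1_comp_simps)
    next
      case (pair u' v' w')
      have "u' = u" using ab au pair by (simp add: G1_simps)
      moreover have "Comp C (Comp C w' u') (Id C (Dom C (Comp C w' u'))) = Comp C w' u'"
        by (rule catD(4)[OF C conjunct1[OF catD(3)[OF C pair(1) pair(3) pair(4)[symmetric]]]])
      moreover have "Dom C (Comp C w' u') = Dom C u" using catD(3)[OF C, of u' w'] pair calculation(1) by simp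
      ultimately show ?thesis using au pair by (simp add: G1_simps G_face1_arr_def G1_comp_simps)
    qed
  next
    case (pair u v w)
    note ap = pair
    show ?thesis using b
    proof (cases rule: G1_arr_cases)
      case (idc u')
      have "u' = v" using ab ap idc by (simp add: G1_simps)
      moreover have "Comp C (Id C (Cod C (Comp C w u))) (Comp C w u) = Comp C w u"
        by (rule catD(5)[OF C conjunct1[OF catD(3)[OF C ap(1) ap(3) ap(4)[symmetric]]]])
      moreover have "Cod C (Comp C w u) = Dom C v" using catD(3)[OF C, of u w] ap by simp
      ultimately show ?thesis using ap idc by (simp add: G1_simps G_face1_arr_def G1_comp_simps)
    next
      case (pair u' v' w')
      have "u' = v" using ab ap pair by (simp add: G1_simps)
      thus ?thesis using ap pair by (simp add: G1_simps G_face1_arr_def G1_comp_simps)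
    qed
  qed
  qed
  show ?thesis unfolding is_functor_def by (rule conjI[OF P1 conjI[OF P2 conjI[OF P3 P4]]])
qed



lemma G1_arr_pairI:
  assumes "u \<in> Arr C" "v \<in> Arr C" "w \<in> Arr C" "Dom C w = Cod C u" "Cod C w = Dom C v"
  shows "(u, v, Some (Comp C w u, Comp C v w)) \<in> G1_arr C"
  unfolding G1_arr_def
  apply (rule UnI2)
  apply (rule CollectI)
  apply (rule exI[of _ u], rule exI[of _ v], rule exI[of _ w])
  using assms by simp

definition gsec :: "('o, 'm) cat \<Rightarrow> 'm \<Rightarrow> 'm G_arr" where
  "gsec C f = (Id C (Dom C f), Id C (Cod C f), Some (Comp C f (Id C (Dom C f)), Comp C (Id C (Cod C f)) f))"

lemma gsec_mem:
  assumes C: "is_category C" and f: "f \<in> Arr C"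
  shows "gsec C f \<in> G1_arr C"
proof -
  have d: "Id C (Dom C f) \<in> Arr C \<and> Dom C (Id C (Dom C f)) = Dom C f \<and> Cod C (Id C (Dom C f)) = Dom C f"
    by (rule catD(2)[OF C conjunct1[OF catD(1)[OF C f]]])
  have c: "Id C (Cod C f) \<in> Arr C \<and> Dom C (Id C (Cod C f)) = Cod C f \<and> Cod C (Id C (Cod C f)) = Cod C f"
    by (rule catD(2)[OF C conjunct2[OF catD(1)[OF C f]]])
  show ?thesis unfolding gsec_def
    by (rule G1_arr_pairI) (use d c f in simp_all)
qed

lemma gsec_comp:
  assumes C: "is_category C" and f: "f \<in> Arr C" and g: "g \<in> Arr C" and fg: "Cod C f = Dom C g"
  shows "gsec C (Comp C g f) = G1_comp C (gsec C g) (gsec C f)"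
proof -
  have gf: "Comp C g f \<in> Arr C \<and> Dom C (Comp C g f) = Dom C f \<and> Cod C (Comp C g f) = Cod C g"
    by (rule catD(3)[OF C f g fg])
  have f1: "Comp C f (Id C (Dom C f)) = f" by (rule catD(4)[OF C f])
  have f2: "Comp C (Id C (Cod C f)) f = f" by (rule catD(5)[OF C f])
  have g1: "Comp C g (Id C (Dom C g)) = g" by (rule catD(4)[OF C g])
  have g2: "Comp C (Id C (Cod C g)) g = g" by (rule catD(5)[OF C g])
  have h1: "Comp C (Comp C g f) (Id C (Dom C (Comp C g f))) = Comp C g f" by (rule catD(4)[OF C conjunct1[OF gf]])
  have h2: "Comp C (Id C (Cod C (Comp C g f))) (Comp C g f) = Comp C g f" by (rule catD(5)[OF C conjunct1[OF gf]])
  have "G1_comp C (gsec C g) (gsec C f) = (Id C (Dom C f), Id C (Cod C g),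
      Some (Comp C (Comp C g (Id C (Dom C g))) (Comp C f (Id C (Dom C f))),
            Comp C (Comp C (Id C (Cod C g)) g) (Comp C (Id C (Cod C f)) f)))"
    unfolding gsec_def fg by (rule G1_comp_simps(3))
  also have "\<dots> = (Id C (Dom C f), Id C (Cod C g), Some (Comp C g f, Comp C g f))"
    by (simp only: f1 f2 g1 g2)
  also have "\<dots> = gsec C (Comp C g f)"
    unfolding gsec_def h1 h2 using gf by simp
  finally show ?thesis by simp
qed

theorem G_part:
  fixes M :: "('m, 'o, 'k::field) module"
  assumes C: "is_category C" and M: "indecomposable C M"
  shows "indecomposable (G1_cat C) (pullback (Cod C) (G_face0_arr C) M) \<and>
         indecomposable (G1_cat C) (pullback (Dom C) (G_face1_arr C) M)"
proof
  have SC: "\<forall>f\<in>Arr C. \<forall>g\<in>Arr C. Cod C f = Dom C g \<longrightarrow> gsec C (Comp C g f) = Comp (G1_cat C) (gsec C g) (gsec C f)"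
    using gsec_comp[OF C] by (simp add: G1_simps)
  have IdO: "\<And>x. x \<in> Obj C \<Longrightarrow> Id C x \<in> Arr C \<and> Dom C (Id C x) = x \<and> Cod C (Id C x) = x"
    by (rule catD(2)[OF C])
  have gD: "\<And>f. f \<in> Arr C \<Longrightarrow> Dom (G1_cat C) (gsec C f) = Id C (Dom C f) \<and> Cod (G1_cat C) (gsec C f) = Id C (Cod C f)"
    unfolding gsec_def by (simp add: G1_simps)
  show "indecomposable (G1_cat C) (pullback (Cod C) (G_face0_arr C) M)"
  proof (rule abstract_main[OF C_id_ok[OF C] M G_face0_functor[OF C] G_BO, where So = "Id C" and Sm = "gsec C"])
    show "\<forall>x\<in>Obj C. Id C x \<in> Obj (G1_cat C) \<and> Cod C (Id C x) = x"
      using IdO by (simp add: G1_simps)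
    show "\<forall>f\<in>Arr C. gsec C f \<in> Arr (G1_cat C) \<and> Dom (G1_cat C) (gsec C f) = Id C (Dom C f) \<and>
       Cod (G1_cat C) (gsec C f) = Id C (Cod C f) \<and> G_face0_arr C (gsec C f) = f"
    proof
      fix f assume f: "f \<in> Arr C"
      have "G_face0_arr C (gsec C f) = f" unfolding gsec_def G_face0_arr_def using catD(5)[OF C f] by simp
      thus "gsec C f \<in> Arr (G1_cat C) \<and> Dom (G1_cat C) (gsec C f) = Id C (Dom C f) \<and>
       Cod (G1_cat C) (gsec C f) = Id C (Cod C f) \<and> G_face0_arr C (gsec C f) = f"
        using gsec_mem[OF C f] gD[OF f] by (simp add: G1_simps)
    qed
    show "\<forall>f\<in>Arr C. \<forall>g\<in>Arr C. Cod C f = Dom C g \<longrightarrow> gsec C (Comp C g f) = Comp (G1_cat C) (gsec C g) (gsec C f)"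
      by (rule SC)
    show "\<forall>X\<in>Obj (G1_cat C). \<exists>a\<in>Arr (G1_cat C).
        (Dom (G1_cat C) a = X \<and> Cod (G1_cat C) a = Id C (Cod C X) \<or> Dom (G1_cat C) a = Id C (Cod C X) \<and> Cod (G1_cat C) a = X) \<and>
        G_face0_arr C a = Id C (Cod C X)"
    proof
      fix u assume "u \<in> Obj (G1_cat C)"
      hence u: "u \<in> Arr C" by (simp add: G1_simps)
      define b where "b = Cod C u"
      have bI: "Id C b \<in> Arr C \<and> Dom C (Id C b) = b \<and> Cod C (Id C b) = b"
        unfolding b_def by (rule IdO[OF conjunct2[OF catD(1)[OF C u]]])
      have ii: "Comp C (Id C (Cod C (Id C b))) (Id C b) = Id C b" by (rule catD(5)[OF C conjunct1[OF bI]])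
      hence ii': "Comp C (Id C b) (Id C b) = Id C b" using bI by simp
      define a where "a = (u, Id C b, Some (Comp C (Id C b) u, Comp C (Id C b) (Id C b)))"
      have "a \<in> G1_arr C" unfolding a_def
        by (rule G1_arr_pairI) (use u bI b_def in simp_all)
      moreover have "Dom (G1_cat C) a = u" "Cod (G1_cat C) a = Id C (Cod C u)" unfolding a_def b_def by (simp_all add: G1_simps)
      moreover have "G_face0_arr C a = Id C (Cod C u)" unfolding a_def G_face0_arr_def using ii' b_def by simp
      ultimately show "\<exists>a\<in>Arr (G1_cat C).
        (Dom (G1_cat C) a = u \<and> Cod (G1_cat C) a = Id C (Cod C u) \<or> Dom (G1_cat C) a = Id C (Cod C u) \<and> Cod (G1_cat C) a = u) \<and>
        G_face0_arr C a = Id C (Cod C u)" unfolding G1_simps(2) by blast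
    qed
  qed
  show "indecomposable (G1_cat C) (pullback (Dom C) (G_face1_arr C) M)"
  proof (rule abstract_main[OF C_id_ok[OF C] M G_face1_functor[OF C] G_BO, where So = "Id C" and Sm = "gsec C"])
    show "\<forall>x\<in>Obj C. Id C x \<in> Obj (G1_cat C) \<and> Dom C (Id C x) = x"
      using IdO by (simp add: G1_simps)
    show "\<forall>f\<in>Arr C. gsec C f \<in> Arr (G1_cat C) \<and> Dom (G1_cat C) (gsec C f) = Id C (Dom C f) \<and>
       Cod (G1_cat C) (gsec C f) = Id C (Cod C f) \<and> G_face1_arr C (gsec C f) = f"
    proof
      fix f assume f: "f \<in> Arr C"
      have "G_face1_arr C (gsec C f) = f" unfolding gsec_def G_face1_arr_def using catD(4)[OF C f] by simp
      thus "gsec C f \<in> Arr (G1_cat C) \<and> Dom (G1_cat C) (gsec C f) = Id C (Dom C f) \<and>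
       Cod (G1_cat C) (gsec C f) = Id C (Cod C f) \<and> G_face1_arr C (gsec C f) = f"
        using gsec_mem[OF C f] gD[OF f] by (simp add: G1_simps)
    qed
    show "\<forall>f\<in>Arr C. \<forall>g\<in>Arr C. Cod C f = Dom C g \<longrightarrow> gsec C (Comp C g f) = Comp (G1_cat C) (gsec C g) (gsec C f)"
      by (rule SC)
    show "\<forall>X\<in>Obj (G1_cat C). \<exists>a\<in>Arr (G1_cat C).
        (Dom (G1_cat C) a = X \<and> Cod (G1_cat C) a = Id C (Dom C X) \<or> Dom (G1_cat C) a = Id C (Dom C X) \<and> Cod (G1_cat C) a = X) \<and>
        G_face1_arr C a = Id C (Dom C X)"
    proof
      fix u assume "u \<in> Obj (G1_cat C)"
      hence u: "u \<in> Arr C" by (simp add: G1_simps)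
      define b where "b = Dom C u"
      have bI: "Id C b \<in> Arr C \<and> Dom C (Id C b) = b \<and> Cod C (Id C b) = b"
        unfolding b_def by (rule IdO[OF conjunct1[OF catD(1)[OF C u]]])
      have ii: "Comp C (Id C (Cod C (Id C b))) (Id C b) = Id C b" by (rule catD(5)[OF C conjunct1[OF bI]])
      hence ii': "Comp C (Id C b) (Id C b) = Id C b" using bI by simp
      define a where "a = (Id C b, u, Some (Comp C (Id C b) (Id C b), Comp C u (Id C b)))"
      have "a \<in> G1_arr C" unfolding a_def
        by (rule G1_arr_pairI) (use u bI b_def in simp_all)
      moreover have "Dom (G1_cat C) a = Id C (Dom C u)" "Cod (G1_cat C) a = u" unfolding a_def b_def by (simp_all add: G1_simps)
      moreover have "G_face1_arr C a = Id C (Dom C u)" unfolding a_def G_face1_arr_def using ii' b_def by simp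
      ultimately show "\<exists>a\<in>Arr (G1_cat C).
        (Dom (G1_cat C) a = u \<and> Cod (G1_cat C) a = Id C (Dom C u) \<or> Dom (G1_cat C) a = Id C (Dom C u) \<and> Cod (G1_cat C) a = u) \<and>
        G_face1_arr C a = Id C (Dom C u)" unfolding G1_simps(2) by blast
    qed
  qed
qed


theorem lemma3p8:
  fixes C :: "('o, 'm) cat"
  assumes "is_category C"
  shows "(\<forall>(n::nat) (M :: (('o, 'm) ladder, ('o, 'm) string_obj, 'k::field) module) i.
            indecomposable (E_cat C n) M \<and> i \<le> Suc n \<longrightarrow>
            indecomposable (E_cat C (Suc n)) (pullback (face_obj C i) (face_arr C i) M))
       \<and> (\<forall>M :: ('m, 'o, 'k) module. indecomposable C M \<longrightarrow>
            indecomposable (G1_cat C) (pullback (Cod C) (G_face0_arr C) M) \<and>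
            indecomposable (G1_cat C) (pullback (Dom C) (G_face1_arr C) M))"
proof (rule conjI)
  show "\<forall>(n::nat) (M :: (('o, 'm) ladder, ('o, 'm) string_obj, 'k::field) module) i.
            indecomposable (E_cat C n) M \<and> i \<le> Suc n \<longrightarrow>
            indecomposable (E_cat C (Suc n)) (pullback (face_obj C i) (face_arr C i) M)"
  proof (intro allI impI)
    fix n :: nat and M :: "(('o, 'm) ladder, ('o, 'm) string_obj, 'k::field) module" and i :: nat
    assume h: "indecomposable (E_cat C n) M \<and> i \<le> Suc n"
    show "indecomposable (E_cat C (Suc n)) (pullback (face_obj C i) (face_arr C i) M)"
      by (rule E_part[OF assms conjunct1[OF h] conjunct2[OF h]])
  qed
  show "\<forall>M :: ('m, 'o, 'k) module. indecomposable C M \<longrightarrow>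
            indecomposable (G1_cat C) (pullback (Cod C) (G_face0_arr C) M) \<and>
            indecomposable (G1_cat C) (pullback (Dom C) (G_face1_arr C) M)"
  proof (intro allI impI)
    fix M :: "('m, 'o, 'k) module"
    assume h: "indecomposable C M"
    show "indecomposable (G1_cat C) (pullback (Cod C) (G_face0_arr C) M) \<and>
            indecomposable (G1_cat C) (pullback (Dom C) (G_face1_arr C) M)"
      by (rule G_part[OF assms h])
  qed
qed

end
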